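(* Let $\mu\neq 0$ be real and let $\gamma=\gamma(s)$ be a non-geodesic curve in the $2$-space form $\mathbb M^2(\rho)$, parametrized by arc-length, with curvature $\kappa$. If $\gamma$ is a critical point of the energy $\mathbf{\Theta}_\mu(\gamma)=\int_\gamma e^{\mu\kappa}\,ds$, then $$\frac{d^2}{ds^2}\left(e^{\mu\kappa}\right)+\left(\kappa^2-\frac{\kappa}{\mu}+\rho\right)e^{\mu\kappa}=0.$$
   Context: $\mathbb M^2(\rho)$ denotes the simply connected complete Riemannian surface of constant curvature $\rho$ (Euclidean plane, round sphere or hyperbolic plane). $\kappa$ is the signed geodesic curvature of $\gamma$. Criticality is with respect to variations of $\gamma$ through regular curves in $\mathbb M^2(\rho)$, disregarding boundary terms (e.g. variations compactly supported in the interior of the curve). *)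

theory Defs
  imports "HOL-Analysis.Analysis"
begin

fun iter_dd :: "('a::real_normed_vector \<Rightarrow> 'b::real_normed_vector) \<Rightarrow> 'a list \<Rightarrow> ('a \<Rightarrow> 'b)" where
  "iter_dd f [] = f"
| "iter_dd f (v # vs) = (\<lambda>x. frechet_derivative (iter_dd f vs) (at x) v)"

definition smooth_on :: "'a::euclidean_space set \<Rightarrow> ('a \<Rightarrow> 'b::real_normed_vector) \<Rightarrow> bool" where
  "smooth_on S f \<longleftrightarrow> (\<forall>vs. set vs \<subseteq> Basis \<longrightarrow> (\<forall>x\<in>S. iter_dd f vs differentiable (at x)))"

text \<open>rho = 0: the plane x3 = 0 (Euclidean); rho > 0: the round sphere of radius 1/sqrt rho
  (Euclidean); rho < 0: the upper sheet of the hyperboloid in Minkowski space R^{2,1}.\<close>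

definition sf_form :: "real \<Rightarrow> real^3 \<Rightarrow> real^3 \<Rightarrow> real" where
  "sf_form \<rho> v w = v$1 * w$1 + v$2 * w$2 + (if \<rho> < 0 then -1 else 1) * (v$3 * w$3)"

definition space_form :: "real \<Rightarrow> (real^3) set" where
  "space_form \<rho> =
     (if \<rho> = 0 then {x. x$3 = 0}
      else if \<rho> > 0 then {x. sf_form \<rho> x x = 1 / \<rho>}
      else {x. sf_form \<rho> x x = 1 / \<rho> \<and> x$3 > 0})"

text \<open>unit normal of the surface at x (with respect to sf_form)\<close>
definition sf_normal :: "real \<Rightarrow> real^3 \<Rightarrow> real^3" where
  "sf_normal \<rho> x = (if \<rho> = 0 then axis 3 1 else sqrt \<bar>\<rho>\<bar> *\<^sub>R x)"

definition det3 :: "real^3 \<Rightarrow> real^3 \<Rightarrow> real^3 \<Rightarrow> real" where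
  "det3 a b c = a$1 * (b$2 * c$3 - b$3 * c$2) - a$2 * (b$1 * c$3 - b$3 * c$1)
              + a$3 * (b$1 * c$2 - b$2 * c$1)"

definition vel :: "(real \<Rightarrow> real^3) \<Rightarrow> real \<Rightarrow> real^3" where
  "vel c s = vector_derivative c (at s)"

definition acc :: "(real \<Rightarrow> real^3) \<Rightarrow> real \<Rightarrow> real^3" where
  "acc c s = vector_derivative (vel c) (at s)"

definition speed :: "real \<Rightarrow> (real \<Rightarrow> real^3) \<Rightarrow> real \<Rightarrow> real" where
  "speed \<rho> c s = sqrt (sf_form \<rho> (vel c s) (vel c s))"

text \<open>signed geodesic curvature of a regular curve c (any parametrization) in M^2(rho):
  kappa = < c'', J c' > / |c'|^3 with J the rotation by pi/2 in the tangent plane,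
  which equals det(N, c', c'') / |c'|^3.\<close>
definition geod_curv :: "real \<Rightarrow> (real \<Rightarrow> real^3) \<Rightarrow> real \<Rightarrow> real" where
  "geod_curv \<rho> c s = det3 (sf_normal \<rho> (c s)) (vel c s) (acc c s) / (speed \<rho> c s) ^ 3"

definition Theta :: "real \<Rightarrow> real \<Rightarrow> (real \<Rightarrow> real^3) \<Rightarrow> real \<Rightarrow> real \<Rightarrow> real" where
  "Theta \<rho> \<mu> c a b = integral {a..b} (\<lambda>s. exp (\<mu> * geod_curv \<rho> c s) * speed \<rho> c s)"

definition Theta_critical :: "real \<Rightarrow> real \<Rightarrow> real set \<Rightarrow> (real \<Rightarrow> real^3) \<Rightarrow> bool" where
  "Theta_critical \<rho> \<mu> I \<gamma> \<longleftrightarrow>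
     (\<forall>(\<epsilon>::real) (\<Gamma>::real \<times> real \<Rightarrow> real^3) a b.
        \<epsilon> > 0 \<and> a \<le> b \<and> {a..b} \<subseteq> I
        \<and> smooth_on ({-\<epsilon><..<\<epsilon>} \<times> I) \<Gamma>
        \<and> (\<forall>t\<in>{-\<epsilon><..<\<epsilon>}. \<forall>s\<in>I. \<Gamma> (t, s) \<in> space_form \<rho>)
        \<and> (\<forall>t\<in>{-\<epsilon><..<\<epsilon>}. \<forall>s\<in>I. vel (\<lambda>s'. \<Gamma> (t, s')) s \<noteq> 0)
        \<and> (\<forall>s\<in>I. \<Gamma> (0, s) = \<gamma> s)
        \<and> (\<forall>t\<in>{-\<epsilon><..<\<epsilon>}. \<forall>s\<in>I - {a..b}. \<Gamma> (t, s) = \<gamma> s)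
      \<longrightarrow> ((\<lambda>t. Theta \<rho> \<mu> (\<lambda>s. \<Gamma> (t, s)) a b) has_real_derivative 0) (at 0))"

end

theory Submission
  imports Defs "HOL-Computational_Algebra.Polynomial"
begin

datatype ex = Cst real | Tv | Sv | Bs nat nat | Cmp nat nat ex | Ad ex ex | Mu ex ex

fun ev :: "(nat \<Rightarrow> nat \<Rightarrow> real \<Rightarrow> real) \<Rightarrow> (nat \<Rightarrow> nat \<Rightarrow> real \<Rightarrow> real) \<Rightarrow> ex \<Rightarrow> real \<times> real \<Rightarrow> real" where
  "ev B H (Cst c) x = c"
| "ev B H Tv x = fst x"
| "ev B H Sv x = snd x"
| "ev B H (Bs i k) x = B i k (snd x)"
| "ev B H (Cmp j k e) x = H j k (ev B H e x)"
| "ev B H (Ad a b) x = ev B H a x + ev B H b x"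
| "ev B H (Mu a b) x = ev B H a x * ev B H b x"

fun dT :: "ex \<Rightarrow> ex" where
  "dT (Cst c) = Cst 0"
| "dT Tv = Cst 1"
| "dT Sv = Cst 0"
| "dT (Bs i k) = Cst 0"
| "dT (Cmp j k e) = Mu (Cmp j (Suc k) e) (dT e)"
| "dT (Ad a b) = Ad (dT a) (dT b)"
| "dT (Mu a b) = Ad (Mu (dT a) b) (Mu a (dT b))"

fun dS :: "ex \<Rightarrow> ex" where
  "dS (Cst c) = Cst 0"
| "dS Tv = Cst 0"
| "dS Sv = Cst 1"
| "dS (Bs i k) = Bs i (Suc k)"
| "dS (Cmp j k e) = Mu (Cmp j (Suc k) e) (dS e)"
| "dS (Ad a b) = Ad (dS a) (dS b)"
| "dS (Mu a b) = Ad (Mu (dS a) b) (Mu a (dS b))"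

lemma ev_dT_dS: "ev B H (dT (dS e)) x = ev B H (dS (dT e)) x"
  by (induction e) (auto simp: algebra_simps)

definition Bok :: "real set \<Rightarrow> (nat \<Rightarrow> nat \<Rightarrow> real \<Rightarrow> real) \<Rightarrow> bool" where
  "Bok I B \<longleftrightarrow> (\<forall>i k s. s \<in> I \<longrightarrow> (B i k has_real_derivative B i (Suc k) s) (at s))"
definition Hok :: "(nat \<Rightarrow> nat \<Rightarrow> real \<Rightarrow> real) \<Rightarrow> bool" where
  "Hok H \<longleftrightarrow> (\<forall>j k u. (H j k has_real_derivative H j (Suc k) u) (at u))"

lemma ev_has_derivative:
  assumes B: "Bok I B" and H: "Hok H" and x: "snd x \<in> I"
  shows "(ev B H e has_derivative (\<lambda>h. fst h * ev B H (dT e) x + snd h * ev B H (dS e) x)) (at x)"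
proof (induction e)
  case (Cst c) then show ?case by (auto intro!: derivative_eq_intros)
next
  case Tv then show ?case by (auto intro!: derivative_eq_intros)
next
  case Sv then show ?case by (auto intro!: derivative_eq_intros)
next
  case (Bs i k)
  have d: "(B i k has_real_derivative B i (Suc k) (snd x)) (at (snd x))"
    using B x unfolding Bok_def by blast
  have "((\<lambda>x. B i k (snd x)) has_derivative (\<lambda>h. B i (Suc k) (snd x) * snd h)) (at x)"
    using has_derivative_compose[OF has_derivative_snd[OF has_derivative_ident] d[unfolded has_field_derivative_def]]
    by (simp add: o_def mult.commute)
  then show ?case by (simp add: mult.commute)
next
  case (Cmp j k e)
  have d: "(H j k has_real_derivative H j (Suc k) (ev B H e x)) (at (ev B H e x))"
    using H unfolding Hok_def by blast
  show ?case
    using has_derivative_compose[OF Cmp d[unfolded has_field_derivative_def]]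
    by (simp add: o_def algebra_simps)
next
  case (Ad a b) then show ?case
    by (auto intro!: derivative_eq_intros simp: algebra_simps)
next
  case (Mu a b) then show ?case
    by (auto intro!: derivative_eq_intros simp: algebra_simps)
qed

definition dirv :: "real \<times> real \<Rightarrow> ex \<Rightarrow> ex" where
  "dirv v e = Ad (Mu (Cst (fst v)) (dT e)) (Mu (Cst (snd v)) (dS e))"

fun dirs :: "(real \<times> real) list \<Rightarrow> ex \<Rightarrow> ex" where
  "dirs [] e = e"
| "dirs (v # vs) e = dirv v (dirs vs e)"

lemma vec_has_derivative:
  fixes f :: "3 \<Rightarrow> 'a::real_normed_vector \<Rightarrow> real"
  assumes "\<And>i. (f i has_derivative f' i) (at x)"
  shows "((\<lambda>x. \<chi> i. f i x) has_derivative (\<lambda>h. \<chi> i. f' i h)) (at x)"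
  apply (subst has_derivative_componentwise_within)
  using assms by (auto simp: Basis_vec_def cart_eq_inner_axis[symmetric] axis_def inner_vec_def)

lemma evvec_has_derivative:
  fixes E :: "3 \<Rightarrow> ex"
  assumes B: "Bok I B" and H: "Hok H" and x: "snd x \<in> I"
  shows "((\<lambda>x. \<chi> i. ev B H (E i) x) has_derivative
           (\<lambda>h. \<chi> i. fst h * ev B H (dT (E i)) x + snd h * ev B H (dS (E i)) x)) (at x)"
  using vec_has_derivative[of "\<lambda>i. ev B H (E i)" "\<lambda>i h. fst h * ev B H (dT (E i)) x + snd h * ev B H (dS (E i)) x" x]
    ev_has_derivative[OF B H x] by blast

lemma iter_dd_ev:
  fixes E :: "3 \<Rightarrow> ex"
  assumes B: "Bok I B" and H: "Hok H" and I: "open I"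
  shows "\<forall>x. snd x \<in> I \<longrightarrow> iter_dd (\<lambda>x. \<chi> i. ev B H (E i) x) vs x = (\<chi> i. ev B H (dirs vs (E i)) x)"
proof (induction vs)
  case Nil then show ?case by simp
next
  case (Cons v vs)
  show ?case
  proof (intro allI impI)
    fix x :: "real \<times> real" assume x: "snd x \<in> I"
    let ?G = "\<lambda>x. \<chi> i. ev B H (dirs vs (E i)) x"
    have o: "open (UNIV \<times> I)" using I by (simp add: open_Times)
    have dG: "(?G has_derivative (\<lambda>h. \<chi> i. fst h * ev B H (dT (dirs vs (E i))) x + snd h * ev B H (dS (dirs vs (E i))) x)) (at x)"
      by (rule evvec_has_derivative[OF B H x])
    have eq: "\<And>y. y \<in> UNIV \<times> I \<Longrightarrow> ?G y = iter_dd (\<lambda>x. \<chi> i. ev B H (E i) x) vs y"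
      using Cons by auto
    have "frechet_derivative (iter_dd (\<lambda>x. \<chi> i. ev B H (E i) x) vs) (at x) = frechet_derivative ?G (at x)"
      by (rule sym, rule frechet_derivative_transform_within_open[OF _ o _ eq]) (use dG x in \<open>auto simp: differentiable_def mem_Times_iff\<close>)
    also have "\<dots> = (\<lambda>h. \<chi> i. fst h * ev B H (dT (dirs vs (E i))) x + snd h * ev B H (dS (dirs vs (E i))) x)"
      using frechet_derivative_at[OF dG] by simp
    finally show "iter_dd (\<lambda>x. \<chi> i. ev B H (E i) x) (v # vs) x = (\<chi> i. ev B H (dirs (v # vs) (E i)) x)"
      by (simp add: dirv_def)
  qed
qed

lemma smooth_ev:
  fixes E :: "3 \<Rightarrow> ex"
  assumes B: "Bok I B" and H: "Hok H" and I: "open I" and S: "S \<subseteq> UNIV \<times> I"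
  shows "smooth_on S (\<lambda>x. \<chi> i. ev B H (E i) x)"
  unfolding smooth_on_def
proof (intro allI impI ballI)
  fix vs :: "(real \<times> real) list" and x assume x: "x \<in> S"
  let ?G = "\<lambda>x. \<chi> i. ev B H (dirs vs (E i)) x"
  have o: "open (UNIV \<times> I)" using I by (simp add: open_Times)
  have sx: "snd x \<in> I" using x S by auto
  obtain D where dG: "(?G has_derivative D) (at x)"
    using evvec_has_derivative[OF B H sx, of "\<lambda>i. dirs vs (E i)"] by blast
  have "(iter_dd (\<lambda>x. \<chi> i. ev B H (E i) x) vs has_derivative D) (at x)"
    apply (rule has_derivative_transform_within_open[OF dG o])
    using sx iter_dd_ev[OF B H I] by (auto simp: mem_Times_iff)
  then show "iter_dd (\<lambda>x. \<chi> i. ev B H (E i) x) vs differentiable (at x)"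
    by (auto simp: differentiable_def)
qed

fun bpoly :: "nat \<Rightarrow> real poly" where
  "bpoly 0 = 1"
| "bpoly (Suc k) = [:0,0,1:] * (bpoly k - pderiv (bpoly k))"

definition bump :: "nat \<Rightarrow> real \<Rightarrow> real" where
  "bump k x = (if x > 0 then poly (bpoly k) (1/x) * exp (-1/x) else 0)"

lemma poly_exp_lim: "((\<lambda>z::real. z * poly p z / exp z) \<longlongrightarrow> 0) at_top"
proof -
  have "(\<lambda>z::real. z * poly p z / exp z) = (\<lambda>z. \<Sum>i\<le>degree p. coeff p i * (z ^ Suc i / exp z))"
    by (rule ext) (simp add: poly_altdef sum_distrib_left sum_divide_distrib mult_ac)
  moreover have "((\<lambda>z::real. \<Sum>i\<le>degree p. coeff p i * (z ^ Suc i / exp z)) \<longlongrightarrow> (\<Sum>i\<le>degree p. coeff p i * 0)) at_top"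
    by (intro tendsto_sum tendsto_mult tendsto_const tendsto_power_div_exp_0)
  ultimately show ?thesis by simp
qed

lemma A: "\<forall>\<^sub>F y in at_left 0. 0 = (bump k y - bump k 0) / (y - 0)"
        unfolding eventually_at_left_field
        by (rule exI[of _ "-1"]) (auto simp: bump_def)
lemma B: "\<forall>\<^sub>F z in at_top. z * poly (bpoly k) z / exp z = (bump k (inverse z) - bump k 0) / (inverse z - 0)"
        unfolding eventually_at_top_linorder
        by (rule exI[of _ 1]) (auto simp: bump_def field_simps exp_minus)
lemma bump_deriv0: "(bump k has_real_derivative 0) (at 0)"
proof -
  let ?f = "\<lambda>y. (bump k y - bump k 0) / (y - 0)"
  have l: "(?f \<longlongrightarrow> 0) (at_left 0)"
    using tendsto_const[of "0::real" "at_left (0::real)"] A[of k] by (rule Lim_transform_eventually)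
  have "((\<lambda>z. ?f (inverse z)) \<longlongrightarrow> 0) at_top"
    using poly_exp_lim[of "bpoly k"] B[of k] by (rule Lim_transform_eventually)
  then have r: "(?f \<longlongrightarrow> 0) (at_right 0)"
    unfolding filterlim_at_right_to_top by simp
  have "(?f \<longlongrightarrow> 0) (at 0)"
    using l r by (rule filterlim_split_at)
  then show ?thesis by (simp add: has_field_derivative_iff)
qed
lemma bump_deriv: "(bump k has_real_derivative bump (Suc k) x) (at x)"
proof -
  consider "x < 0" | "x = 0" | "x > 0" by linarith
  then show ?thesis
  proof cases
    case 1
    have "((\<lambda>x. 0) has_real_derivative 0) (at x)" by simp
    then have "(bump k has_real_derivative 0) (at x)"
      by (rule has_field_derivative_transform_within_open[of _ _ _ "{..<0}"]) (use 1 in \<open>auto simp: bump_def\<close>)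
    then show ?thesis using 1 by (simp add: bump_def)
  next
    case 2 then show ?thesis using bump_deriv0 by (simp add: bump_def)
  next
    case 3
    have d: "((\<lambda>x. poly (bpoly k) (1/x) * exp (-1/x)) has_real_derivative
          poly (pderiv (bpoly k)) (1/x) * (- 1 / x^2) * exp (-1/x) + poly (bpoly k) (1/x) * (exp (-1/x) * (1 / x^2))) (at x)"
    proof -
      have d1: "((\<lambda>x. 1/x) has_real_derivative (-1/x^2)) (at x)"
        using 3 DERIV_inverse[of x] by (simp add: inverse_eq_divide power2_eq_square)
      have d2: "((\<lambda>x. poly (bpoly k) (1/x)) has_real_derivative poly (pderiv (bpoly k)) (1/x) * (-1/x^2)) (at x)"
        using DERIV_chain2[OF poly_DERIV d1] .
      have d3: "((\<lambda>x. exp (-1/x)) has_real_derivative exp (-1/x) * (1/x^2)) (at x)"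
        using DERIV_chain2[OF DERIV_exp DERIV_minus[OF d1]] by simp
      show ?thesis using DERIV_mult[OF d2 d3] by (simp add: mult_ac)
    qed
    have "(bump k has_real_derivative
          poly (pderiv (bpoly k)) (1/x) * (- 1 / x^2) * exp (-1/x) + poly (bpoly k) (1/x) * (exp (-1/x) * (1 / x^2))) (at x)"
      by (rule has_field_derivative_transform_within_open[OF d, of "{0<..}"]) (use 3 in \<open>auto simp: bump_def\<close>)
    moreover have "poly (pderiv (bpoly k)) (1/x) * (- 1 / x^2) * exp (-1/x) + poly (bpoly k) (1/x) * (exp (-1/x) * (1 / x^2)) = bump (Suc k) x"
      using 3 by (simp add: bump_def algebra_simps power2_eq_square divide_simps)
    ultimately show ?thesis by simp
  qed
qed

lemma bump0_pos: "x > 0 \<Longrightarrow> bump 0 x > 0"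
  by (simp add: bump_def)
lemma bump0_nonneg: "bump 0 x \<ge> 0"
  by (simp add: bump_def)
lemma bump_zero: "x \<le> 0 \<Longrightarrow> bump k x = 0"
  by (simp add: bump_def)

definition gf :: "real \<Rightarrow> real^3 \<Rightarrow> real^3 \<Rightarrow> real" where
  "gf q v w = v$1 * w$1 + v$2 * w$2 + q * (v$3 * w$3)"

definition nuv :: "real \<Rightarrow> real^3 \<Rightarrow> real^3 \<Rightarrow> real^3" where
  "nuv q a b = vector [a$2 * b$3 - a$3 * b$2, a$3 * b$1 - a$1 * b$3, q * (a$1 * b$2 - a$2 * b$1)]"

lemma vec3_eq: "(x::real^3) = y \<longleftrightarrow> x$1 = y$1 \<and> x$2 = y$2 \<and> x$3 = y$3"
  by (auto simp: vec_eq_iff forall_3)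

lemma gf_sym: "gf q v w = gf q w v" by (simp add: gf_def algebra_simps)
lemma gf_add1: "gf q (a + b) w = gf q a w + gf q b w" by (simp add: gf_def algebra_simps)
lemma gf_add2: "gf q w (a + b) = gf q w a + gf q w b" by (simp add: gf_def algebra_simps)
lemma gf_diff1: "gf q (a - b) w = gf q a w - gf q b w" by (simp add: gf_def algebra_simps)
lemma gf_diff2: "gf q w (a - b) = gf q w a - gf q w b" by (simp add: gf_def algebra_simps)
lemma gf_scale1: "gf q (c *\<^sub>R a) w = c * gf q a w" by (simp add: gf_def algebra_simps)
lemma gf_scale2: "gf q w (c *\<^sub>R a) = c * gf q w a" by (simp add: gf_def algebra_simps)
lemma gf_neg1: "gf q (- a) w = - gf q a w" by (simp add: gf_def algebra_simps)
lemma gf_neg2: "gf q w (- a) = - gf q w a" by (simp add: gf_def algebra_simps)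
lemmas gf_lin = gf_add1 gf_add2 gf_diff1 gf_diff2 gf_scale1 gf_scale2 gf_neg1 gf_neg2

lemma det3_add1: "det3 (a + b) c d = det3 a c d + det3 b c d" by (simp add: det3_def algebra_simps)
lemma det3_add2: "det3 c (a + b) d = det3 c a d + det3 c b d" by (simp add: det3_def algebra_simps)
lemma det3_add3: "det3 c d (a + b) = det3 c d a + det3 c d b" by (simp add: det3_def algebra_simps)
lemma det3_diff1: "det3 (a - b) c d = det3 a c d - det3 b c d" by (simp add: det3_def algebra_simps)
lemma det3_diff2: "det3 c (a - b) d = det3 c a d - det3 c b d" by (simp add: det3_def algebra_simps)
lemma det3_diff3: "det3 c d (a - b) = det3 c d a - det3 c d b" by (simp add: det3_def algebra_simps)
lemma det3_scale1: "det3 (k *\<^sub>R a) c d = k * det3 a c d" by (simp add: det3_def algebra_simps)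
lemma det3_scale2: "det3 c (k *\<^sub>R a) d = k * det3 c a d" by (simp add: det3_def algebra_simps)
lemma det3_scale3: "det3 c d (k *\<^sub>R a) = k * det3 c d a" by (simp add: det3_def algebra_simps)
lemma det3_neg1: "det3 (- a) c d = - det3 a c d" by (simp add: det3_def algebra_simps)
lemma det3_neg2: "det3 c (- a) d = - det3 c a d" by (simp add: det3_def algebra_simps)
lemma det3_neg3: "det3 c d (- a) = - det3 c d a" by (simp add: det3_def algebra_simps)
lemmas det3_lin = det3_add1 det3_add2 det3_add3 det3_diff1 det3_diff2 det3_diff3
  det3_scale1 det3_scale2 det3_scale3 det3_neg1 det3_neg2 det3_neg3
lemma det3_rep12: "det3 a a c = 0" by (simp add: det3_def algebra_simps)
lemma det3_rep13: "det3 a c a = 0" by (simp add: det3_def algebra_simps)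
lemma det3_rep23: "det3 c a a = 0" by (simp add: det3_def algebra_simps)
lemma det3_swap23: "det3 a b c = - det3 a c b" by (simp add: det3_def algebra_simps)
lemma det3_cyc: "det3 a b c = det3 b c a" by (simp add: det3_def algebra_simps)

lemma nuv_same: "nuv q a a = 0" by (simp add: nuv_def vec3_eq)
lemma nuv_add2: "nuv q a (b + c) = nuv q a b + nuv q a c" by (simp add: nuv_def vec3_eq algebra_simps)
lemma nuv_diff2: "nuv q a (b - c) = nuv q a b - nuv q a c" by (simp add: nuv_def vec3_eq algebra_simps)
lemma nuv_scale1: "nuv q (k *\<^sub>R a) b = k *\<^sub>R nuv q a b" by (simp add: nuv_def vec3_eq algebra_simps)
lemma nuv_scale2: "nuv q a (k *\<^sub>R b) = k *\<^sub>R nuv q a b" by (simp add: nuv_def vec3_eq algebra_simps)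

lemma gf_nuv: assumes "q * q = 1" shows "gf q v (nuv q n t) = det3 n t v"
  using assms unfolding gf_def nuv_def det3_def by simp algebra

locale frame =
  fixes q :: real and n t :: "real^3"
  assumes qq: "q * q = 1" and nn: "gf q n n = q" and nt: "gf q n t = 0" and tt: "gf q t t = 1"
begin

lemma nu_nu: "gf q (nuv q n t) (nuv q n t) = 1"
  using qq nn nt tt unfolding gf_def nuv_def by simp algebra
lemma nu_n: "gf q (nuv q n t) n = 0"
  using qq unfolding gf_def nuv_def by simp algebra
lemma nu_t: "gf q (nuv q n t) t = 0"
  using qq unfolding gf_def nuv_def by simp algebra
lemma decomp: "v = (q * gf q v n) *\<^sub>R n + gf q v t *\<^sub>R t + gf q v (nuv q n t) *\<^sub>R nuv q n t"
  using qq nn nt tt unfolding gf_def nuv_def vec3_eq by simp algebra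
lemma nu_nu2: "nuv q n (nuv q n t) = - t"
  using qq nn nt tt unfolding gf_def nuv_def vec3_eq by simp algebra
lemma det_ntnu: "det3 n t (nuv q n t) = 1"
  using nu_nu gf_nuv[OF qq] by simp
end

lemma comp_vderiv:
  assumes "(X has_vector_derivative X') (at s)"
  shows "((\<lambda>s. X s $ i) has_real_derivative X' $ i) (at s)"
proof -
  have "((\<lambda>s. X s $ i) has_derivative (\<lambda>h. (h *\<^sub>R X') $ i)) (at s)"
    using bounded_linear.has_derivative[OF bounded_linear_vec_nth assms[unfolded has_vector_derivative_def]] .
  moreover have "(\<lambda>h. (h *\<^sub>R X') $ i) = (*) (X' $ i)" by (rule ext) simp
  ultimately show ?thesis by (simp add: has_field_derivative_def)
qed

lemma vec_vderiv:
  fixes X :: "real \<Rightarrow> real^3"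
  assumes "\<And>i. ((\<lambda>s. X s $ i) has_real_derivative X' $ i) (at s)"
  shows "(X has_vector_derivative X') (at s)"
proof -
  have "((\<lambda>x. \<chi> i. X x $ i) has_derivative (\<lambda>h. \<chi> i. h * X' $ i)) (at s)"
  proof (rule vec_has_derivative)
    fix i :: 3
    have "(\<lambda>h. h * X' $ i) = (*) (X' $ i)" by (rule ext) (simp add: mult.commute)
    then show "((\<lambda>s. X s $ i) has_derivative (\<lambda>h. h * X' $ i)) (at s)"
      using assms[of i] by (simp add: has_field_derivative_def)
  qed
  moreover have "(\<lambda>h. \<chi> i. h * X' $ i) = (\<lambda>h. h *\<^sub>R X')" by (rule ext) (simp add: vec_eq_iff)
  ultimately show ?thesis by (simp add: has_vector_derivative_def)
qed

lemma gf_deriv: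
  assumes "(X has_vector_derivative X') (at s)" "(Y has_vector_derivative Y') (at s)"
  shows "((\<lambda>s. gf q (X s) (Y s)) has_real_derivative gf q X' (Y s) + gf q (X s) Y') (at s)"
  unfolding gf_def
  using comp_vderiv[OF assms(1)] comp_vderiv[OF assms(2)]
  by (auto intro!: derivative_eq_intros simp: algebra_simps)

lemma det3_deriv:
  assumes "(X has_vector_derivative X') (at s)" "(Y has_vector_derivative Y') (at s)" "(Z has_vector_derivative Z') (at s)"
  shows "((\<lambda>s. det3 (X s) (Y s) (Z s)) has_real_derivative det3 X' (Y s) (Z s) + det3 (X s) Y' (Z s) + det3 (X s) (Y s) Z') (at s)"
  unfolding det3_def
  using comp_vderiv[OF assms(1)] comp_vderiv[OF assms(2)] comp_vderiv[OF assms(3)]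
  by (auto intro!: derivative_eq_intros simp: algebra_simps)

lemma nuv_deriv:
  assumes "(X has_vector_derivative X') (at s)" "(Y has_vector_derivative Y') (at s)"
  shows "((\<lambda>s. nuv q (X s) (Y s)) has_vector_derivative nuv q X' (Y s) + nuv q (X s) Y') (at s)"
proof (rule vec_vderiv)
  fix i :: 3
  note d = comp_vderiv[OF assms(1)] comp_vderiv[OF assms(2)]
  show "((\<lambda>s. nuv q (X s) (Y s) $ i) has_real_derivative (nuv q X' (Y s) + nuv q (X s) Y') $ i) (at s)"
    using exhaust_3[of i]
    by (auto simp: nuv_def intro!: derivative_eq_intros d simp: algebra_simps)
qed

lemma deriv_const_zero:
  assumes "open I" "s \<in> I" "(f has_real_derivative f') (at s)" "\<forall>s\<in>I. f s = c"
  shows "f' = 0"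
proof -
  have "((\<lambda>_. c) has_real_derivative 0) (at s)" by simp
  then have "(f has_real_derivative 0) (at s)"
    by (rule has_field_derivative_transform_within_open[OF _ assms(1,2)]) (use assms(4) in auto)
  then show ?thesis using assms(3) DERIV_unique by blast
qed

locale cv =
  fixes \<rho> :: real and I :: "real set" and \<gamma> :: "real \<Rightarrow> real^3"
  assumes I: "open I"
    and sm: "smooth_on I \<gamma>"
    and on: "\<forall>s\<in>I. \<gamma> s \<in> space_form \<rho>"
    and unit: "\<forall>s\<in>I. sf_form \<rho> (vel \<gamma> s) (vel \<gamma> s) = 1"
begin

definition "sg = (if \<rho> < 0 then -1 else (1::real))"
definition "rr = sqrt \<bar>\<rho>\<bar>"
definition "al = (if \<rho> = 0 then 0 else rr)"
definition "Dg k = iter_dd \<gamma> (replicate k 1)"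
definition "nn s = sf_normal \<rho> (\<gamma> s)"
definition "nu s = nuv sg (nn s) (Dg 1 s)"
definition "kap s = det3 (nn s) (Dg 1 s) (Dg 2 s)"

lemma sgsg: "sg * sg = 1" by (simp add: sg_def)
lemma sf_gf: "sf_form \<rho> = gf sg"
  by (rule ext, rule ext) (simp add: sf_form_def gf_def sg_def)
lemma Dg0: "Dg 0 = \<gamma>" by (simp add: Dg_def)

lemma Dg_deriv: assumes "s \<in> I" shows "(Dg k has_vector_derivative Dg (Suc k) s) (at s)"
proof -
  have "set (replicate k (1::real)) \<subseteq> Basis" by auto
  then have d: "Dg k differentiable (at s)"
    using sm assms unfolding smooth_on_def Dg_def by blast
  have "Dg (Suc k) s = frechet_derivative (Dg k) (at s) 1"
    by (simp add: Dg_def)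
  also have "\<dots> = vector_derivative (Dg k) (at s)"
    by (simp add: frechet_derivative_eq_vector_derivative[OF d])
  finally show ?thesis using d vector_derivative_works by metis
qed

lemma vel_eq: "s \<in> I \<Longrightarrow> vel \<gamma> s = Dg 1 s"
  unfolding vel_def using Dg_deriv[of s 0] by (simp add: Dg0 vector_derivative_at)

lemma acc_eq: assumes "s \<in> I" shows "acc \<gamma> s = Dg 2 s"
proof -
  have "(Dg 1 has_vector_derivative Dg 2 s) (at s)"
    using Dg_deriv[OF assms, of 1] by (simp add: numeral_2_eq_2)
  then have "(vel \<gamma> has_vector_derivative Dg 2 s) (at s)"
    by (rule has_vector_derivative_transform_within_open[OF _ I assms]) (simp add: vel_eq)
  then show ?thesis unfolding acc_def by (rule vector_derivative_at)
qed

lemma TT: "s \<in> I \<Longrightarrow> gf sg (Dg 1 s) (Dg 1 s) = 1"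
  using unit vel_eq sf_gf by auto

lemma TA: assumes "s \<in> I" shows "gf sg (Dg 1 s) (Dg 2 s) = 0"
proof -
  have "((\<lambda>s. gf sg (Dg 1 s) (Dg 1 s)) has_real_derivative gf sg (Dg 2 s) (Dg 1 s) + gf sg (Dg 1 s) (Dg 2 s)) (at s)"
    using gf_deriv[OF Dg_deriv[OF assms, of 1] Dg_deriv[OF assms, of 1]] by (simp add: numeral_2_eq_2)
  moreover have "\<forall>s\<in>I. gf sg (Dg 1 s) (Dg 1 s) = 1" using TT by auto
  ultimately have "gf sg (Dg 2 s) (Dg 1 s) + gf sg (Dg 1 s) (Dg 2 s) = 0" by (rule deriv_const_zero[OF I assms])
  then show ?thesis by (simp add: gf_sym)
qed

lemma nz_cases:
  assumes "\<rho> \<noteq> 0" "s \<in> I"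
  shows "gf sg (\<gamma> s) (\<gamma> s) = 1/\<rho>" "gf sg (\<gamma> s) (Dg 1 s) = 0" "gf sg (\<gamma> s) (Dg 2 s) = -1"
proof -
  have c: "\<forall>s\<in>I. gf sg (\<gamma> s) (\<gamma> s) = 1/\<rho>"
    using on assms(1) by (auto simp: space_form_def sf_gf split: if_splits)
  then show "gf sg (\<gamma> s) (\<gamma> s) = 1/\<rho>" using assms by auto
  have c1: "gf sg (\<gamma> s) (Dg 1 s) = 0" if s: "s \<in> I" for s
  proof -
    have "((\<lambda>s. gf sg (\<gamma> s) (\<gamma> s)) has_real_derivative gf sg (Dg 1 s) (\<gamma> s) + gf sg (\<gamma> s) (Dg 1 s)) (at s)"
      using gf_deriv[OF Dg_deriv[OF s, of 0] Dg_deriv[OF s, of 0]] by (simp add: Dg0)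
    from deriv_const_zero[OF I s this c] show ?thesis by (simp add: gf_sym)
  qed
  then show "gf sg (\<gamma> s) (Dg 1 s) = 0" using assms by auto
  have "((\<lambda>s. gf sg (\<gamma> s) (Dg 1 s)) has_real_derivative gf sg (Dg 1 s) (Dg 1 s) + gf sg (\<gamma> s) (Dg 2 s)) (at s)"
    using gf_deriv[OF Dg_deriv[OF assms(2), of 0] Dg_deriv[OF assms(2), of 1]] by (simp add: Dg0 numeral_2_eq_2)
  moreover have "\<forall>s\<in>I. gf sg (\<gamma> s) (Dg 1 s) = 0" using c1 by auto
  ultimately have "gf sg (Dg 1 s) (Dg 1 s) + gf sg (\<gamma> s) (Dg 2 s) = 0" by (rule deriv_const_zero[OF I assms(2)])
  then show "gf sg (\<gamma> s) (Dg 2 s) = -1" using TT[OF assms(2)] by simp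
qed

lemma z_cases:
  assumes "\<rho> = 0" "s \<in> I"
  shows "\<gamma> s $ 3 = 0" "Dg 1 s $ 3 = 0" "Dg 2 s $ 3 = 0"
proof -
  have c: "\<forall>s\<in>I. \<gamma> s $ 3 = 0"
    using on assms(1) by (auto simp: space_form_def)
  then show "\<gamma> s $ 3 = 0" using assms by auto
  have c1: "Dg 1 s $ 3 = 0" if s: "s \<in> I" for s
  proof -
    have "((\<lambda>s. Dg 0 s $ 3) has_real_derivative Dg 1 s $ 3) (at s)"
      by (rule comp_vderiv) (use Dg_deriv[OF s, of 0] in simp)
    moreover have "\<forall>s\<in>I. Dg 0 s $ 3 = 0" using c by (simp add: Dg0)
    ultimately show ?thesis by (rule deriv_const_zero[OF I s])
  qed
  then show "Dg 1 s $ 3 = 0" using assms by auto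
  have "\<forall>s\<in>I. Dg 1 s $ 3 = 0" using c1 by auto
  from deriv_const_zero[OF I assms(2) comp_vderiv[OF Dg_deriv[OF assms(2), of 1], of 3] this]
  show "Dg 2 s $ 3 = 0" by (simp add: numeral_2_eq_2)
qed

lemma rr_sq: "rr * rr = \<bar>\<rho>\<bar>" by (simp add: rr_def)

lemma nn_facts:
  assumes s: "s \<in> I"
  shows "gf sg (nn s) (nn s) = sg" "gf sg (nn s) (Dg 1 s) = 0" "gf sg (nn s) (Dg 2 s) = - rr"
    "\<rho> *\<^sub>R \<gamma> s = (sg * rr) *\<^sub>R nn s"
proof -
  show "gf sg (nn s) (nn s) = sg"
  proof (cases "\<rho> = 0")
    case True then show ?thesis unfolding nn_def sf_normal_def gf_def sg_def axis_def by simp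
  next
    case False
    then show ?thesis using nz_cases[OF False s] rr_sq
      by (simp add: nn_def sf_normal_def gf_lin sg_def)
  qed
  show "gf sg (nn s) (Dg 1 s) = 0"
  proof (cases "\<rho> = 0")
    case True then show ?thesis using z_cases[OF True s] unfolding nn_def sf_normal_def gf_def sg_def axis_def by simp
  next
    case False
    then show ?thesis using nz_cases[OF False s] by (simp add: nn_def sf_normal_def gf_lin)
  qed
  show "gf sg (nn s) (Dg 2 s) = - rr"
  proof (cases "\<rho> = 0")
    case True then show ?thesis using z_cases[OF True s] unfolding nn_def sf_normal_def gf_def sg_def axis_def rr_def by simp
  next
    case False
    then show ?thesis using nz_cases[OF False s] by (simp add: nn_def sf_normal_def gf_lin rr_def)
  qed
  show "\<rho> *\<^sub>R \<gamma> s = (sg * rr) *\<^sub>R nn s"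
  proof (cases "\<rho> = 0")
    case True then show ?thesis unfolding rr_def by simp
  next
    case False
    have "sg * rr * rr = \<rho>" using rr_sq by (simp add: sg_def)
    then show ?thesis using False by (simp add: nn_def sf_normal_def mult.assoc flip: rr_def)
  qed
qed

lemma nn_deriv: assumes s: "s \<in> I" shows "(nn has_vector_derivative al *\<^sub>R Dg 1 s) (at s)"
proof (cases "\<rho> = 0")
  case True then show ?thesis unfolding nn_def[abs_def] sf_normal_def al_def by simp
next
  case False
  have "((\<lambda>s. rr *\<^sub>R \<gamma> s) has_vector_derivative rr *\<^sub>R Dg 1 s) (at s)"
    using Dg_deriv[OF s, of 0] by (auto intro!: derivative_eq_intros simp: Dg0)
  then show ?thesis using False by (simp add: nn_def[abs_def] sf_normal_def al_def rr_def)
qed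

lemma frame_at: "s \<in> I \<Longrightarrow> frame sg (nn s) (Dg 1 s)"
  using nn_facts TT sgsg by unfold_locales auto

lemma A_eq: assumes s: "s \<in> I" shows "Dg 2 s = kap s *\<^sub>R nu s - (sg * rr) *\<^sub>R nn s"
proof -
  interpret frame sg "nn s" "Dg 1 s" using frame_at[OF s] .
  have "Dg 2 s = (sg * gf sg (Dg 2 s) (nn s)) *\<^sub>R nn s + gf sg (Dg 2 s) (Dg 1 s) *\<^sub>R Dg 1 s
      + gf sg (Dg 2 s) (nuv sg (nn s) (Dg 1 s)) *\<^sub>R nuv sg (nn s) (Dg 1 s)"
    by (rule decomp)
  also have "\<dots> = kap s *\<^sub>R nu s - (sg * rr) *\<^sub>R nn s"
    using nn_facts[OF s] TA[OF s] gf_nuv[OF sgsg]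
    by (simp add: gf_sym[of sg "Dg 2 s"] kap_def nu_def)
  finally show ?thesis .
qed

lemma nu_deriv: assumes s: "s \<in> I" shows "(nu has_vector_derivative - kap s *\<^sub>R Dg 1 s) (at s)"
proof -
  interpret frame sg "nn s" "Dg 1 s" using frame_at[OF s] .
  have "(nu has_vector_derivative nuv sg (al *\<^sub>R Dg 1 s) (Dg 1 s) + nuv sg (nn s) (Dg 2 s)) (at s)"
    unfolding nu_def[abs_def]
    using nuv_deriv[OF nn_deriv[OF s] Dg_deriv[OF s, of 1]] by (simp add: numeral_2_eq_2)
  also have "nuv sg (al *\<^sub>R Dg 1 s) (Dg 1 s) + nuv sg (nn s) (Dg 2 s) = - kap s *\<^sub>R Dg 1 s"
    using A_eq[OF s] nu_nu2 by (simp add: nuv_scale1 nuv_same nuv_diff2 nuv_scale2 nu_def)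
  finally show ?thesis .
qed

lemma gamma_nu: assumes s: "s \<in> I"
  shows "\<rho> \<noteq> 0 \<Longrightarrow> gf sg (\<gamma> s) (nu s) = 0" "\<rho> = 0 \<Longrightarrow> nu s $ 3 = 0" "gf sg (nu s) (nu s) = 1"
    "gf sg (Dg 1 s) (nu s) = 0" "det3 (nn s) (Dg 1 s) (nu s) = 1"
proof -
  interpret frame sg "nn s" "Dg 1 s" using frame_at[OF s] .
  show "gf sg (nu s) (nu s) = 1" using nu_nu by (simp add: nu_def)
  show "gf sg (Dg 1 s) (nu s) = 0" using nu_t by (simp add: nu_def gf_sym)
  show "det3 (nn s) (Dg 1 s) (nu s) = 1" using det_ntnu by (simp add: nu_def)
  show "\<rho> = 0 \<Longrightarrow> nu s $ 3 = 0" unfolding nu_def nuv_def nn_def sf_normal_def axis_def by simp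
  assume r: "\<rho> \<noteq> 0"
  have "gf sg (nn s) (nu s) = 0" using nu_n by (simp add: nu_def gf_sym)
  then show "gf sg (\<gamma> s) (nu s) = 0" using r by (simp add: nn_def sf_normal_def gf_lin)
qed

lemma geod_eq: "s \<in> I \<Longrightarrow> geod_curv \<rho> \<gamma> s = kap s"
  using TT by (simp add: geod_curv_def speed_def vel_eq acc_eq kap_def nn_def sf_gf)

end
lemma times_lam: "(\<lambda>h::real. h * c) = (*) c" by (rule ext) simp

lemma ev_dS_deriv:
  assumes B: "Bok I B" and H: "Hok H" and s: "s \<in> I"
  shows "((\<lambda>s'. ev B H e (t, s')) has_real_derivative ev B H (dS e) (t, s)) (at s)"
proof -
  have d1: "((\<lambda>s'. (t, s')) has_derivative (\<lambda>h. (0, h))) (at s)"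
    by (auto intro!: derivative_eq_intros)
  have "((\<lambda>s'. ev B H e (t, s')) has_derivative (\<lambda>h. fst (0::real, h) * ev B H (dT e) (t, s) + snd (0::real, h) * ev B H (dS e) (t, s))) (at s)"
    using has_derivative_compose[OF d1 ev_has_derivative[OF B H, of "(t, s)"]] s by (simp add: o_def)
  then show ?thesis by (simp add: has_field_derivative_def times_lam)
qed

lemma ev_dT_deriv:
  assumes B: "Bok I B" and H: "Hok H" and s: "s \<in> I"
  shows "((\<lambda>t'. ev B H e (t', s)) has_real_derivative ev B H (dT e) (t, s)) (at t)"
proof -
  have d1: "((\<lambda>t'. (t', s)) has_derivative (\<lambda>h. (h, 0))) (at t)"
    by (auto intro!: derivative_eq_intros)
  have "((\<lambda>t'. ev B H e (t', s)) has_derivative (\<lambda>h. fst (h, 0::real) * ev B H (dT e) (t, s) + snd (h, 0::real) * ev B H (dS e) (t, s))) (at t)"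
    using has_derivative_compose[OF d1 ev_has_derivative[OF B H, of "(t, s)"]] s by (simp add: o_def)
  then show ?thesis by (simp add: has_field_derivative_def times_lam)
qed

lemma ev_dS_unique:
  assumes B: "Bok I B" and H: "Hok H" and J: "open J" "J \<subseteq> I" and s: "s \<in> J"
    and eq: "\<forall>s'\<in>J. ev B H e (t, s') = f s'" and f: "(f has_real_derivative f') (at s)"
  shows "ev B H (dS e) (t, s) = f'"
proof -
  have "(f has_real_derivative ev B H (dS e) (t, s)) (at s)"
    by (rule has_field_derivative_transform_within_open[OF ev_dS_deriv[OF B H] J(1) s]) (use J s eq in auto)
  then show ?thesis using f DERIV_unique by blast
qed

lemma ev_dT_unique:
  assumes B: "Bok I B" and H: "Hok H" and s: "s \<in> I"
    and eq: "\<forall>t'. ev B H e (t', s) = f t'" and f: "(f has_real_derivative f') (at t)"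
  shows "ev B H (dT e) (t, s) = f'"
proof -
  have "(\<lambda>t'. ev B H e (t', s)) = f" using eq by auto
  then show ?thesis using ev_dT_deriv[OF B H s, of e t] f DERIV_unique by metis
qed

lemma ev_continuous_on:
  assumes B: "Bok I B" and H: "Hok H"
  shows "continuous_on (UNIV \<times> I) (ev B H e)"
proof -
  have "continuous (at x) (ev B H e)" if "x \<in> UNIV \<times> I" for x
    using ev_has_derivative[OF B H, of x e] that by (auto intro: has_derivative_continuous simp: mem_Times_iff)
  then show ?thesis by (simp add: continuous_at_imp_continuous_on)
qed

definition vv :: "(nat \<Rightarrow> nat \<Rightarrow> real \<Rightarrow> real) \<Rightarrow> (nat \<Rightarrow> nat \<Rightarrow> real \<Rightarrow> real) \<Rightarrow> (3 \<Rightarrow> ex) \<Rightarrow> real \<times> real \<Rightarrow> real^3" where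
  "vv B H E x = (\<chi> i. ev B H (E i) x)"

lemma vv_nth[simp]: "vv B H E x $ i = ev B H (E i) x" by (simp add: vv_def)

lemma vv_dS_deriv:
  assumes B: "Bok I B" and H: "Hok H" and s: "s \<in> I"
  shows "((\<lambda>s'. vv B H E (t, s')) has_vector_derivative vv B H (\<lambda>i. dS (E i)) (t, s)) (at s)"
  by (rule vec_vderiv) (simp add: ev_dS_deriv[OF B H s])

lemma vv_dT_deriv:
  assumes B: "Bok I B" and H: "Hok H" and s: "s \<in> I"
  shows "((\<lambda>t'. vv B H E (t', s)) has_vector_derivative vv B H (\<lambda>i. dT (E i)) (t, s)) (at t)"
  by (rule vec_vderiv) (simp add: ev_dT_deriv[OF B H s])

lemma vv_continuous_on:
  assumes B: "Bok I B" and H: "Hok H"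
  shows "continuous_on (UNIV \<times> I) (vv B H E)"
  unfolding vv_def
  by (rule continuous_on_vec_lambda) (rule ev_continuous_on[OF B H])

lemma continuous_on_det3:
  fixes X Y Z :: "'a::topological_space \<Rightarrow> real^3"
  assumes "continuous_on S X" "continuous_on S Y" "continuous_on S Z"
  shows "continuous_on S (\<lambda>x. det3 (X x) (Y x) (Z x))"
  unfolding det3_def using assms by (intro continuous_intros)

lemma continuous_on_gf:
  fixes X Y :: "'a::topological_space \<Rightarrow> real^3"
  assumes "continuous_on S X" "continuous_on S Y"
  shows "continuous_on S (\<lambda>x. gf q (X x) (Y x))"
  unfolding gf_def using assms by (intro continuous_intros)

context cv begin

definition "Sf u = (if \<rho> > 0 then sin (rr * u) / rr else if \<rho> < 0 then sinh (rr * u) / rr else u)"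
definition "Cf u = (if \<rho> > 0 then cos (rr * u) else if \<rho> < 0 then cosh (rr * u) else 1)"
definition "HS k u = (- \<rho>) ^ (k div 2) * (if even k then Sf u else Cf u)"
definition "Hf m (j::nat) k u = (if j = 0 then bump k u else if j = 1 then HS k u else m ^ k * exp (m * u))"
definition "Bf j k s = Dg k s $ (of_nat j :: 3)"

lemma rr_pos: "\<rho> \<noteq> 0 \<Longrightarrow> rr > 0" by (simp add: rr_def)

lemma Sf_deriv: "(Sf has_real_derivative Cf u) (at u)"
proof -
  consider "\<rho> > 0" | "\<rho> < 0" | "\<rho> = 0" by linarith
  then show ?thesis
  proof cases
    case 1
    then have r: "rr \<noteq> 0" using rr_pos by force
    have "((\<lambda>u. sin (rr * u) / rr) has_real_derivative cos (rr * u)) (at u)"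
      using r by (auto intro!: derivative_eq_intros)
    then show ?thesis using 1 unfolding Sf_def[abs_def] Cf_def by simp
  next
    case 2
    then have r: "rr \<noteq> 0" using rr_pos by force
    have "((\<lambda>u. sinh (rr * u) / rr) has_real_derivative cosh (rr * u)) (at u)"
      using r by (auto intro!: derivative_eq_intros)
    then show ?thesis using 2 unfolding Sf_def[abs_def] Cf_def by simp
  next
    case 3
    then show ?thesis unfolding Sf_def[abs_def] Cf_def by simp
  qed
qed

lemma Cf_deriv: "(Cf has_real_derivative (- \<rho>) * Sf u) (at u)"
proof -
  consider "\<rho> > 0" | "\<rho> < 0" | "\<rho> = 0" by linarith
  then show ?thesis
  proof cases
    case 1
    then have r: "rr \<noteq> 0" "rr * rr = \<rho>" using rr_pos rr_sq by force+
    have "((\<lambda>u. cos (rr * u)) has_real_derivative - (rr * rr) * (sin (rr * u) / rr)) (at u)"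
      using r(1) by (auto intro!: derivative_eq_intros)
    moreover have "Cf = (\<lambda>u. cos (rr * u))" using 1 by (auto simp: Cf_def[abs_def])
    moreover have "- (rr * rr) * (sin (rr * u) / rr) = - \<rho> * Sf u" using 1 r(2) by (simp add: Sf_def)
    ultimately show ?thesis by simp
  next
    case 2
    then have r: "rr \<noteq> 0" "rr * rr = - \<rho>" using rr_pos rr_sq by force+
    have "((\<lambda>u. cosh (rr * u)) has_real_derivative (rr * rr) * (sinh (rr * u) / rr)) (at u)"
      using r(1) by (auto intro!: derivative_eq_intros)
    moreover have "Cf = (\<lambda>u. cosh (rr * u))" using 2 by (auto simp: Cf_def[abs_def])
    moreover have "(rr * rr) * (sinh (rr * u) / rr) = - \<rho> * Sf u" using 2 r(2) by (simp add: Sf_def)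
    ultimately show ?thesis by simp
  next
    case 3
    then show ?thesis unfolding Sf_def Cf_def[abs_def] by simp
  qed
qed

lemma CS_id: "Cf u * Cf u + \<rho> * (Sf u * Sf u) = 1"
proof -
  consider "\<rho> > 0" | "\<rho> < 0" | "\<rho> = 0" by linarith
  then show ?thesis
  proof cases
    case 1
    then have r: "rr \<noteq> 0" "rr * rr = \<rho>" using rr_pos rr_sq by force+
    have "cos (rr * u) * cos (rr * u) + (rr * rr) * (sin (rr * u) / rr * (sin (rr * u) / rr)) = 1"
      using r(1) sin_cos_squared_add[of "rr * u"] by (simp add: field_simps power2_eq_square)
    then show ?thesis using 1 r unfolding Sf_def Cf_def by simp
  next
    case 2
    then have r: "rr \<noteq> 0" "rr * rr = - \<rho>" using rr_pos rr_sq by force+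
    have "cosh (rr * u) * cosh (rr * u) - (rr * rr) * (sinh (rr * u) / rr * (sinh (rr * u) / rr)) = 1"
      using r(1) cosh_square_eq[of "rr * u"] by (simp add: field_simps power2_eq_square)
    then show ?thesis using 2 r unfolding Sf_def Cf_def by simp
  next
    case 3
    then show ?thesis unfolding Sf_def Cf_def by simp
  qed
qed

lemma Sf0[simp]: "Sf 0 = 0" by (simp add: Sf_def)
lemma Cf0[simp]: "Cf 0 = 1" by (simp add: Cf_def)

lemma HS_deriv: "(HS k has_real_derivative HS (Suc k) u) (at u)"
proof (cases "even k")
  case True
  then have "HS k = (\<lambda>u. (- \<rho>) ^ (k div 2) * Sf u)" "HS (Suc k) u = (- \<rho>) ^ (k div 2) * Cf u"
    by (auto simp: HS_def[abs_def])
  then show ?thesis by (auto intro!: derivative_eq_intros Sf_deriv)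
next
  case False
  then have "HS k = (\<lambda>u. (- \<rho>) ^ (k div 2) * Cf u)" "HS (Suc k) u = (- \<rho>) ^ (k div 2) * ((- \<rho>) * Sf u)"
    by (auto simp: HS_def[abs_def] elim!: oddE)
  then show ?thesis by (auto intro!: derivative_eq_intros Cf_deriv)
qed

lemma HS_simps[simp]: "HS 0 u = Sf u" "HS 1 u = Cf u" "HS 2 u = - \<rho> * Sf u"
  by (simp_all add: HS_def)

lemma Hok_Hf: "Hok (Hf m)"
  unfolding Hok_def
proof (intro allI)
  fix j k u
  show "(Hf m j k has_real_derivative Hf m j (Suc k) u) (at u)"
  proof -
    consider "j = 0" | "j = 1" | "j \<noteq> 0 \<and> j \<noteq> 1" by blast
    then show ?thesis
    proof cases
      case 1 then have "Hf m j = bump" by (auto simp: Hf_def[abs_def])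
      then show ?thesis using bump_deriv by simp
    next
      case 2 then have "Hf m j = HS" by (auto simp: Hf_def[abs_def])
      then show ?thesis using HS_deriv by simp
    next
      case 3
      then have "Hf m j k = (\<lambda>u. m ^ k * exp (m * u))" "Hf m j (Suc k) u = m ^ k * (exp (m * u) * m)"
        by (auto simp: Hf_def[abs_def])
      then show ?thesis by (auto intro!: derivative_eq_intros)
    qed
  qed
qed

lemma Bok_Bf: "Bok I Bf"
  unfolding Bok_def Bf_def[abs_def] using comp_vderiv[OF Dg_deriv] by blast

end

fun noT :: "ex \<Rightarrow> bool" where
  "noT Tv = False"
| "noT (Cmp j k e) = noT e"
| "noT (Ad x y) = (noT x \<and> noT y)"
| "noT (Mu x y) = (noT x \<and> noT y)"
| "noT _ = True"

lemma noT_dT: "noT e \<Longrightarrow> ev B H (dT e) x = 0"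
  by (induction e) auto

definition "subx x y = Ad x (Mu (Cst (-1)) y)"

locale cvab = cv +
  fixes a b \<mu> :: real
  assumes ab: "a < b" and abI: "{a..b} \<subseteq> I"
begin

abbreviation "B \<equiv> Bf"
abbreviation "H \<equiv> Hf \<mu>"

lemma HS_Suc[simp]: "HS (Suc 0) u = Cf u" "HS (Suc (Suc 0)) u = - \<rho> * Sf u"
  by (simp_all add: HS_def)

definition "phx = Mu (Cmp 0 0 (Ad Sv (Cst (-a)))) (Cmp 0 0 (Ad (Cst b) (Mu (Cst (-1)) Sv)))"
definition "ux = Mu Tv phx"
definition "nx (j::nat) = (if \<rho> = 0 then Cst (if j = 3 then 1 else 0) else Mu (Cst rr) (Bs j 0))"
definition "nux (j::nat) = (if j = 1 then subx (Mu (nx 2) (Bs 3 1)) (Mu (nx 3) (Bs 2 1))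
   else if j = 2 then subx (Mu (nx 3) (Bs 1 1)) (Mu (nx 1) (Bs 3 1))
   else Mu (Cst sg) (subx (Mu (nx 1) (Bs 2 1)) (Mu (nx 2) (Bs 1 1))))"
definition "ix (i::3) = (if i = 1 then 1 else if i = 2 then 2 else (3::nat))"
definition "Gx i = Ad (Mu (Cmp 1 1 ux) (Bs (ix i) 0)) (Mu (Cmp 1 0 ux) (nux (ix i)))"

definition "phi s = bump 0 (s - a) * bump 0 (b - s)"

lemma of_nat_ix[simp]: "(of_nat (ix i) :: 3) = i"
  using exhaust_3[of i] by (auto simp: ix_def)

lemma ev_phx[simp]: "ev B H phx x = phi (snd x)"
  by (simp add: phx_def phi_def Hf_def)

lemma ev_nx: "j \<in> {1,2,3} \<Longrightarrow> ev B H (nx j) x = nn (snd x) $ (of_nat j)"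
  unfolding nx_def nn_def sf_normal_def Bf_def
  by (auto simp: axis_def Dg0 rr_def)

lemma ev_nux: "ev B H (nux (ix i)) x = nu (snd x) $ i"
proof -
  have "ix i = 1 \<or> ix i = 2 \<or> ix i = 3" by (auto simp: ix_def)
  then show ?thesis
    using exhaust_3[of i]
    by (auto simp: nux_def subx_def ev_nx nu_def nuv_def Bf_def ix_def)
qed

lemma ev_Gx: "ev B H (Gx i) (t, s) = (Cf (t * phi s) *\<^sub>R \<gamma> s + Sf (t * phi s) *\<^sub>R nu s) $ i"
  by (simp add: Gx_def ux_def ev_nux Hf_def Bf_def Dg0)

lemma vv_Gx: "vv B H Gx (t, s) = Cf (t * phi s) *\<^sub>R \<gamma> s + Sf (t * phi s) *\<^sub>R nu s"
  by (simp add: vec_eq_iff ev_Gx)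

lemma noT_nux: "noT (nux j)"
  by (simp add: nux_def nx_def subx_def)


lemma ev_dT_Gx0: "ev B H (dT (Gx i)) (0, s) = (phi s *\<^sub>R nu s) $ i"
  by (simp add: Gx_def ux_def ev_nux Hf_def Bf_def Dg0 noT_dT[OF noT_nux])


definition "ph1 s = ev B H (dS phx) (0, s)"
definition "ph2 s = ev B H (dS (dS phx)) (0, s)"
definition "kap1 s = det3 (al *\<^sub>R Dg 1 s) (Dg 1 s) (Dg 2 s) + det3 (nn s) (Dg 2 s) (Dg 2 s) + det3 (nn s) (Dg 1 s) (Dg 3 s)"
definition "Wf s = phi s *\<^sub>R nu s"
definition "W1 s = ph1 s *\<^sub>R nu s - (phi s * kap s) *\<^sub>R Dg 1 s"
definition "W2 s = ph2 s *\<^sub>R nu s - (ph1 s * kap s) *\<^sub>R Dg 1 s - (ph1 s * kap s + phi s * kap1 s) *\<^sub>R Dg 1 s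
   - (phi s * kap s) *\<^sub>R Dg 2 s"

lemma BH: "Bok I B" "Hok H" using Bok_Bf Hok_Hf by auto

lemma phi_out: "s \<le> a \<or> s \<ge> b \<Longrightarrow> phi s = 0"
  by (auto simp: phi_def bump_zero)
lemma phi_pos: "a < s \<Longrightarrow> s < b \<Longrightarrow> phi s > 0"
  by (simp add: phi_def bump0_pos)
lemma phi_nonneg: "phi s \<ge> 0"
  by (simp add: phi_def bump0_nonneg)

lemma phi_deriv: "s \<in> I \<Longrightarrow> (phi has_real_derivative ph1 s) (at s)"
  using ev_dS_deriv[OF BH, of s phx 0] by (simp add: ph1_def)
lemma ph1_deriv: "s \<in> I \<Longrightarrow> (ph1 has_real_derivative ph2 s) (at s)"
  using ev_dS_deriv[OF BH, of s "dS phx" 0] by (simp add: ph1_def[abs_def] ph2_def)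
lemma ph1_ab: "ph1 a = 0" "ph1 b = 0"
  by (simp_all add: ph1_def phx_def Hf_def bump_zero)

lemma kap_deriv: assumes s: "s \<in> I" shows "(kap has_real_derivative kap1 s) (at s)"
proof -
  have "(Dg 1 has_vector_derivative Dg 2 s) (at s)" "(Dg 2 has_vector_derivative Dg 3 s) (at s)"
    using Dg_deriv[OF s, of 1] Dg_deriv[OF s, of 2] by (simp_all add: numeral_2_eq_2 numeral_3_eq_3)
  from det3_deriv[OF nn_deriv[OF s] this]
  show ?thesis by (simp add: kap_def[abs_def] kap1_def)
qed

lemma W_deriv: assumes s: "s \<in> I" shows "(Wf has_vector_derivative W1 s) (at s)"
proof -
  have "((\<lambda>s. phi s *\<^sub>R nu s) has_vector_derivative phi s *\<^sub>R (- kap s *\<^sub>R Dg 1 s) + ph1 s *\<^sub>R nu s) (at s)"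
    by (rule has_vector_derivative_scaleR[OF phi_deriv[OF s] nu_deriv[OF s]])
  then show ?thesis by (simp add: Wf_def[abs_def] W1_def algebra_simps)
qed

lemma W1_deriv: assumes s: "s \<in> I" shows "(W1 has_vector_derivative W2 s) (at s)"
proof -
  have T: "(Dg 1 has_vector_derivative Dg 2 s) (at s)"
    using Dg_deriv[OF s, of 1] by (simp add: numeral_2_eq_2)
  have pk: "((\<lambda>s. phi s * kap s) has_real_derivative ph1 s * kap s + phi s * kap1 s) (at s)"
    using DERIV_mult[OF phi_deriv[OF s] kap_deriv[OF s]] by (simp add: mult.commute)
  have "((\<lambda>s. ph1 s *\<^sub>R nu s - (phi s * kap s) *\<^sub>R Dg 1 s) has_vector_derivative
     (ph1 s *\<^sub>R (- kap s *\<^sub>R Dg 1 s) + ph2 s *\<^sub>R nu s) - ((phi s * kap s) *\<^sub>R Dg 2 s + (ph1 s * kap s + phi s * kap1 s) *\<^sub>R Dg 1 s)) (at s)"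
    by (intro has_vector_derivative_diff has_vector_derivative_scaleR ph1_deriv[OF s] nu_deriv[OF s] pk T)
  then show ?thesis by (simp add: W1_def[abs_def] W2_def algebra_simps)
qed

lemma ev_Gx0: "ev B H (Gx i) (0, s) = \<gamma> s $ i"
  by (simp add: ev_Gx)

lemma V0: assumes s: "s \<in> I" shows "ev B H (dS (Gx i)) (0, s) = Dg 1 s $ i"
  by (rule ev_dS_unique[OF BH I order_refl s, of _ _ "\<lambda>s. \<gamma> s $ i"])
     (use comp_vderiv[OF Dg_deriv[OF s, of 0]] in \<open>auto simp: ev_Gx0 Dg0\<close>)

lemma A0: assumes s: "s \<in> I" shows "ev B H (dS (dS (Gx i))) (0, s) = Dg 2 s $ i"
  by (rule ev_dS_unique[OF BH I order_refl s, of _ _ "\<lambda>s. Dg 1 s $ i"])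
     (use comp_vderiv[OF Dg_deriv[OF s, of 1]] in \<open>auto simp: V0 numeral_2_eq_2\<close>)

lemma Vt0: assumes s: "s \<in> I" shows "ev B H (dT (dS (Gx i))) (0, s) = W1 s $ i"
  unfolding ev_dT_dS
  by (rule ev_dS_unique[OF BH I order_refl s, of _ _ "\<lambda>s. Wf s $ i"])
     (use comp_vderiv[OF W_deriv[OF s]] in \<open>auto simp: ev_dT_Gx0 Wf_def\<close>)

lemma At0: assumes s: "s \<in> I" shows "ev B H (dT (dS (dS (Gx i)))) (0, s) = W2 s $ i"
  unfolding ev_dT_dS
  by (rule ev_dS_unique[OF BH I order_refl s, of _ _ "\<lambda>s. W1 s $ i"])
     (use comp_vderiv[OF W1_deriv[OF s]] in \<open>auto simp: Vt0\<close>)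


lemma al_sg_rr: "al * (sg * rr) = \<rho>"
  using rr_sq by (auto simp: al_def sg_def)

lemma det_vals: assumes s: "s \<in> I"
  shows "det3 (nn s) (Dg 1 s) (nu s) = 1" "det3 (nn s) (nu s) (Dg 1 s) = -1"
    "det3 (nu s) (Dg 1 s) (nn s) = -1" "det3 (nn s) (Dg 1 s) (Dg 1 s) = 0"
    "det3 (nn s) (Dg 1 s) (nn s) = 0" "det3 (nn s) (nu s) (nu s) = 0" "det3 (nn s) (nu s) (nn s) = 0"
    "det3 (nu s) (Dg 1 s) (nu s) = 0"
proof -
  show 1: "det3 (nn s) (Dg 1 s) (nu s) = 1" using gamma_nu[OF s] by simp
  show 2: "det3 (nn s) (nu s) (Dg 1 s) = -1" using 1 det3_swap23[of "nn s" "nu s" "Dg 1 s"] by simp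
  show "det3 (nu s) (Dg 1 s) (nn s) = -1" using 2 det3_cyc[of "nu s" "Dg 1 s" "nn s"] det3_cyc[of "Dg 1 s" "nn s" "nu s"] by simp
qed (simp_all add: det3_rep12 det3_rep13 det3_rep23)

definition "Ddt0 s = det3 (al *\<^sub>R Wf s) (Dg 1 s) (Dg 2 s) + det3 (nn s) (W1 s) (Dg 2 s) + det3 (nn s) (Dg 1 s) (W2 s)"

lemma Ddt0_val: assumes s: "s \<in> I" shows "Ddt0 s = ph2 s + (\<rho> - 2 * (kap s)\<^sup>2) * phi s"
proof -
  have "Ddt0 s = al * (sg * rr) * phi s + ph2 s - 2 * kap s * kap s * phi s"
    unfolding Ddt0_def W2_def W1_def Wf_def A_eq[OF s]
    using det_vals[OF s]
    by (simp add: det3_lin del: One_nat_def)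
  then show ?thesis using al_sg_rr by (simp add: power2_eq_square algebra_simps)
qed

lemma Qt0_val: assumes s: "s \<in> I" shows "gf sg (Dg 1 s) (W1 s) = - phi s * kap s"
  using gamma_nu[OF s] TT[OF s] by (simp add: W1_def gf_lin)


definition "Gv = vv B H Gx"
definition "Vv = vv B H (\<lambda>i. dS (Gx i))"
definition "Av = vv B H (\<lambda>i. dS (dS (Gx i)))"
definition "Gt = vv B H (\<lambda>i. dT (Gx i))"
definition "Vt = vv B H (\<lambda>i. dT (dS (Gx i)))"
definition "At = vv B H (\<lambda>i. dT (dS (dS (Gx i))))"

definition "Qp x = gf sg (Vv x) (Vv x)"
definition "Ddp x = det3 (sf_normal \<rho> (Gv x)) (Vv x) (Av x)"
definition "Ddtp x = det3 (al *\<^sub>R Gt x) (Vv x) (Av x) + det3 (sf_normal \<rho> (Gv x)) (Vt x) (Av x)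
   + det3 (sf_normal \<rho> (Gv x)) (Vv x) (At x)"
definition "Qtp x = 2 * gf sg (Vv x) (Vt x)"
definition "spp x = sqrt (Qp x)"
definition "sptp x = Qtp x / (2 * sqrt (Qp x))"
definition "kpp x = Ddp x / spp x ^ 3"
definition "kptp x = (Ddtp x * spp x ^ 3 - Ddp x * (3 * spp x ^ 2 * sptp x)) / (spp x ^ 3 * spp x ^ 3)"
definition "Fi x = exp (\<mu> * kpp x) * spp x"
definition "Fx x = exp (\<mu> * kpp x) * (\<mu> * kptp x) * spp x + exp (\<mu> * kpp x) * sptp x"

lemma sfn_deriv:
  assumes "(X has_vector_derivative X') (at t)"
  shows "((\<lambda>t. sf_normal \<rho> (X t)) has_vector_derivative al *\<^sub>R X') (at t)"
proof (cases "\<rho> = 0")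
  case True
  then show ?thesis unfolding sf_normal_def al_def by simp
next
  case False
  then show ?thesis unfolding sf_normal_def al_def rr_def using assms
    by (auto intro!: derivative_eq_intros)
qed

lemma Fi_deriv:
  assumes s: "s \<in> I" and Q: "Qp (t, s) > 0"
  shows "((\<lambda>t. Fi (t, s)) has_real_derivative Fx (t, s)) (at t)"
proof -
  have G: "((\<lambda>t. Gv (t, s)) has_vector_derivative Gt (t, s)) (at t)"
    unfolding Gv_def Gt_def by (rule vv_dT_deriv[OF BH s])
  have V: "((\<lambda>t. Vv (t, s)) has_vector_derivative Vt (t, s)) (at t)"
    unfolding Vv_def Vt_def by (rule vv_dT_deriv[OF BH s])
  have A: "((\<lambda>t. Av (t, s)) has_vector_derivative At (t, s)) (at t)"
    unfolding Av_def At_def by (rule vv_dT_deriv[OF BH s])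
  have dD: "((\<lambda>t. Ddp (t, s)) has_real_derivative Ddtp (t, s)) (at t)"
    unfolding Ddp_def Ddtp_def using det3_deriv[OF sfn_deriv[OF G] V A] by simp
  have dQ: "((\<lambda>t. Qp (t, s)) has_real_derivative Qtp (t, s)) (at t)"
    unfolding Qp_def Qtp_def using gf_deriv[OF V V] by (simp add: gf_sym)
  have dsp: "((\<lambda>t. spp (t, s)) has_real_derivative sptp (t, s)) (at t)"
    unfolding spp_def sptp_def
    using DERIV_chain2[OF DERIV_real_sqrt[OF Q] dQ] by (simp add: divide_simps mult.commute)
  have sp0: "spp (t, s) \<noteq> 0" using Q by (simp add: spp_def)
  have dk: "((\<lambda>t. kpp (t, s)) has_real_derivative kptp (t, s)) (at t)"
  proof -
    have p: "((\<lambda>t. spp (t, s) ^ 3) has_real_derivative of_nat 3 * (sptp (t, s) * spp (t, s) ^ (3 - Suc 0))) (at t)"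
      by (rule DERIV_power[OF dsp])
    have "((\<lambda>t. Ddp (t, s) / spp (t, s) ^ 3) has_real_derivative
        (Ddtp (t, s) * spp (t, s) ^ 3 - Ddp (t, s) * (of_nat 3 * (sptp (t, s) * spp (t, s) ^ (3 - Suc 0)))) / (spp (t, s) ^ 3 * spp (t, s) ^ 3)) (at t)"
      by (rule DERIV_divide[OF dD p]) (use sp0 in simp)
    then show ?thesis unfolding kpp_def[abs_def] kptp_def by (simp add: mult_ac)
  qed
  have "((\<lambda>t. exp (\<mu> * kpp (t, s)) * spp (t, s)) has_real_derivative
        exp (\<mu> * kpp (t, s)) * (\<mu> * kptp (t, s)) * spp (t, s) + exp (\<mu> * kpp (t, s)) * sptp (t, s)) (at t)"
    using dk dsp by (auto intro!: derivative_eq_intros simp: algebra_simps)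
  then show ?thesis unfolding Fi_def[abs_def] Fx_def by simp
qed


lemma continuous_on_sfn:
  assumes "continuous_on S X"
  shows "continuous_on S (\<lambda>x. sf_normal \<rho> (X x))"
  unfolding sf_normal_def using assms by (cases "\<rho> = 0") (auto intro!: continuous_intros)

lemma cont_F:
  assumes S: "S \<subseteq> UNIV \<times> I" and Q: "\<And>x. x \<in> S \<Longrightarrow> Qp x > 0"
  shows "continuous_on S Fx" "continuous_on S Fi"
proof -
  have c: "continuous_on S (vv B H E)" for E
    using continuous_on_subset[OF vv_continuous_on[OF BH] S] .
  note cs = c[of Gx, folded Gv_def] c[of "\<lambda>i. dS (Gx i)", folded Vv_def] c[of "\<lambda>i. dS (dS (Gx i))", folded Av_def]
    c[of "\<lambda>i. dT (Gx i)", folded Gt_def] c[of "\<lambda>i. dT (dS (Gx i))", folded Vt_def] c[of "\<lambda>i. dT (dS (dS (Gx i)))", folded At_def]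
  have cQ: "continuous_on S Qp" unfolding Qp_def[abs_def] by (intro continuous_on_gf cs)
  have cQt: "continuous_on S Qtp" unfolding Qtp_def[abs_def] by (intro continuous_intros continuous_on_gf cs)
  have cD: "continuous_on S Ddp" unfolding Ddp_def[abs_def] by (intro continuous_on_det3 continuous_on_sfn cs)
  have cDt: "continuous_on S Ddtp" unfolding Ddtp_def[abs_def]
    by (intro continuous_intros continuous_on_det3 continuous_on_sfn cs)
  have csp: "continuous_on S spp" unfolding spp_def[abs_def] by (intro continuous_intros cQ)
  have nz: "x \<in> S \<Longrightarrow> spp x \<noteq> 0" for x using Q[of x] by (simp add: spp_def)
  have csptp: "continuous_on S sptp" unfolding sptp_def[abs_def]
    using Q by (intro continuous_intros cQ cQt) force+
  have ck: "continuous_on S kpp" unfolding kpp_def[abs_def]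
    using nz by (intro continuous_intros cD csp) auto
  have ckt: "continuous_on S kptp" unfolding kptp_def[abs_def]
    using nz by (intro continuous_intros cD cDt csp csptp) auto
  show "continuous_on S Fx" unfolding Fx_def[abs_def] by (intro continuous_intros ck ckt csp csptp)
  show "continuous_on S Fi" unfolding Fi_def[abs_def] by (intro continuous_intros ck csp)
qed


lemma vals0: assumes s: "s \<in> I"
  shows "Gv (0, s) = \<gamma> s" "Vv (0, s) = Dg 1 s" "Av (0, s) = Dg 2 s"
    "Gt (0, s) = Wf s" "Vt (0, s) = W1 s" "At (0, s) = W2 s"
  by (simp_all add: vec_eq_iff Gv_def Vv_def Av_def Gt_def Vt_def At_def ev_Gx0 V0[OF s] A0[OF s]
     ev_dT_Gx0 Wf_def Vt0[OF s] At0[OF s])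

lemma Fx0: assumes s: "s \<in> I"
  shows "Fx (0, s) = exp (\<mu> * kap s) * (\<mu> * (ph2 s + (\<rho> + (kap s)\<^sup>2) * phi s) - kap s * phi s)"
proof -
  have Q: "Qp (0, s) = 1" using TT[OF s] by (simp add: Qp_def vals0[OF s])
  have sp: "spp (0, s) = 1" using Q by (simp add: spp_def)
  have spt: "sptp (0, s) = - phi s * kap s" using Q Qt0_val[OF s] by (simp add: sptp_def Qtp_def vals0[OF s])
  have D: "Ddp (0, s) = kap s" by (simp add: Ddp_def vals0[OF s] kap_def nn_def)
  have Dt: "Ddtp (0, s) = ph2 s + (\<rho> - 2 * (kap s)\<^sup>2) * phi s"
    using Ddt0_val[OF s] by (simp add: Ddtp_def Ddt0_def vals0[OF s] nn_def)
  have k: "kpp (0, s) = kap s" using D sp by (simp add: kpp_def)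
  have kt: "kptp (0, s) = ph2 s + (\<rho> + (kap s)\<^sup>2) * phi s"
    using D Dt sp spt by (simp add: kptp_def power2_eq_square algebra_simps)
  show ?thesis using k kt sp spt by (simp add: Fx_def algebra_simps)
qed


lemma Gv_eq: "Gv (t, s) = Cf (t * phi s) *\<^sub>R \<gamma> s + Sf (t * phi s) *\<^sub>R nu s"
  by (simp add: Gv_def vv_Gx)

lemma Vv_out: assumes s: "s \<in> I" "s \<notin> {a..b}" shows "Vv (t, s) = Dg 1 s"
proof -
  have J: "open (I - {a..b})" using I by (simp add: open_Diff)
  have "ev B H (dS (Gx i)) (t, s) = Dg 1 s $ i" for i
  proof (rule ev_dS_unique[OF BH J _ _ , of s _ _ "\<lambda>s. \<gamma> s $ i"])
    show "\<forall>s'\<in>I - {a..b}. ev B H (Gx i) (t, s') = \<gamma> s' $ i"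
      using phi_out by (auto simp: ev_Gx)
  qed (use s comp_vderiv[OF Dg_deriv[OF s(1), of 0]] in \<open>auto simp: Dg0\<close>)
  then show ?thesis by (simp add: Vv_def vec_eq_iff)
qed

lemma Q_unif: "\<exists>e>0. \<forall>t s. \<bar>t\<bar> < e \<and> s \<in> {a..b} \<longrightarrow> Qp (t, s) > 1/2"
proof -
  let ?K = "cbox (-1, a) (1::real, b)"
  have K: "?K \<subseteq> UNIV \<times> I" using abI by (auto simp: cbox_Pair_eq)
  have "continuous_on (UNIV \<times> I) Qp"
    unfolding Qp_def[abs_def] Vv_def by (intro continuous_on_gf vv_continuous_on[OF BH])
  then have "uniformly_continuous_on ?K Qp"
    by (intro compact_uniformly_continuous continuous_on_subset[OF _ K]) auto
  then obtain d where d: "d > 0" "\<And>x x'. x \<in> ?K \<Longrightarrow> x' \<in> ?K \<Longrightarrow> dist x' x < d \<Longrightarrow> dist (Qp x') (Qp x) < 1/2"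
    unfolding uniformly_continuous_on_def by (meson half_gt_zero zero_less_one)
  show ?thesis
  proof (intro exI[of _ "min d 1"] conjI allI impI)
    show "min d 1 > 0" using d by simp
    fix t s assume ts: "\<bar>t\<bar> < min d 1 \<and> s \<in> {a..b}"
    have m: "(t, s) \<in> ?K" "(0, s) \<in> ?K" using ts by (auto simp: cbox_Pair_eq)
    have "dist (t, s) (0::real, s) < d" using ts by (simp add: dist_Pair_Pair dist_real_def)
    from d(2)[OF m(2) m(1) this] have "dist (Qp (t, s)) (Qp (0, s)) < 1/2" .
    moreover have "Qp (0, s) = 1" using TT abI ts by (auto simp: Qp_def vals0)
    ultimately show "Qp (t, s) > 1/2" unfolding dist_real_def by linarith
  qed
qed

lemma vel_Gv: "s \<in> I \<Longrightarrow> vel (\<lambda>s. Gv (t, s)) s = Vv (t, s)"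
  unfolding vel_def Gv_def Vv_def by (rule vector_derivative_at[OF vv_dS_deriv[OF BH]])

lemma acc_Gv: assumes s: "s \<in> I" shows "acc (\<lambda>s. Gv (t, s)) s = Av (t, s)"
proof -
  have "((\<lambda>s. Vv (t, s)) has_vector_derivative Av (t, s)) (at s)"
    unfolding Vv_def Av_def by (rule vv_dS_deriv[OF BH s])
  then have "(vel (\<lambda>s. Gv (t, s)) has_vector_derivative Av (t, s)) (at s)"
    by (rule has_vector_derivative_transform_within_open[OF _ I s]) (simp add: vel_Gv)
  then show ?thesis unfolding acc_def by (rule vector_derivative_at)
qed

lemma Theta_eq: "Theta \<rho> \<mu> (\<lambda>s. Gv (t, s)) a b = integral {a..b} (\<lambda>s. Fi (t, s))"
  unfolding Theta_def
proof (rule integral_cong)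
  fix s assume "s \<in> {a..b}"
  then have s: "s \<in> I" using abI by auto
  show "exp (\<mu> * geod_curv \<rho> (\<lambda>s. Gv (t, s)) s) * speed \<rho> (\<lambda>s. Gv (t, s)) s = Fi (t, s)"
    by (simp add: geod_curv_def speed_def vel_Gv[OF s] acc_Gv[OF s] Fi_def kpp_def spp_def Qp_def Ddp_def sf_gf)
qed


lemma Gv_gf: assumes s: "s \<in> I" and r: "\<rho> \<noteq> 0" shows "gf sg (Gv (t, s)) (Gv (t, s)) = 1 / \<rho>"
proof -
  let ?C = "Cf (t * phi s)" and ?S = "Sf (t * phi s)"
  have "gf sg (Gv (t, s)) (Gv (t, s)) = ?C * ?C * (1/\<rho>) + ?S * ?S"
    using nz_cases[OF r s] gamma_nu[OF s] r
    by (simp add: Gv_eq gf_lin gf_sym[of sg "nu s" "\<gamma> s"] algebra_simps)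
  also have "\<dots> = (?C * ?C + \<rho> * (?S * ?S)) / \<rho>" using r by (simp add: field_simps)
  also have "\<dots> = 1 / \<rho>" using CS_id by simp
  finally show ?thesis .
qed

lemma Gv_cont_t: assumes s: "s \<in> I" shows "continuous_on A (\<lambda>t. Gv (t, s) $ 3)"
proof -
  have "((\<lambda>t. Gv (t, s) $ 3) has_real_derivative ev B H (dT (Gx 3)) (t, s)) (at t)" for t
    using ev_dT_deriv[OF BH s, of "Gx 3" t] by (simp add: Gv_def)
  then show ?thesis
    by (meson DERIV_isCont continuous_at_imp_continuous_on)
qed

lemma Gv_space: assumes s: "s \<in> I" shows "Gv (t, s) \<in> space_form \<rho>"
proof -
  consider "\<rho> = 0" | "\<rho> > 0" | "\<rho> < 0" by linarith
  then show ?thesis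
  proof cases
    case 1
    have "Gv (t, s) $ 3 = 0" using z_cases[OF 1 s] gamma_nu(2)[OF s 1] by (simp add: Gv_eq)
    then show ?thesis using 1 by (simp add: space_form_def)
  next
    case 2
    then show ?thesis using Gv_gf[OF s] by (simp add: space_form_def sf_gf)
  next
    case 3
    have nz: "Gv (t', s) $ 3 \<noteq> 0" for t'
    proof
      assume z: "Gv (t', s) $ 3 = 0"
      have "gf sg (Gv (t', s)) (Gv (t', s)) \<ge> 0" using z
        by (simp add: gf_def)
      moreover have "gf sg (Gv (t', s)) (Gv (t', s)) < 0" using Gv_gf[OF s, of t'] 3 by simp
      ultimately show False by simp
    qed
    have p0: "Gv (0, s) $ 3 > 0" using on s 3 by (auto simp: vals0[OF s] space_form_def)
    have "Gv (t, s) $ 3 > 0"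
    proof (rule ccontr)
      assume "\<not> Gv (t, s) $ 3 > 0"
      then have le: "Gv (t, s) $ 3 \<le> 0" by simp
      have "\<exists>x. Gv (x, s) $ 3 = 0"
      proof (cases "t \<ge> 0")
        case True
        from IVT2'[of "\<lambda>t. Gv (t, s) $ 3" t 0 0, OF le _ True Gv_cont_t[OF s]] p0 show ?thesis by auto
      next
        case False
        from IVT'[of "\<lambda>t. Gv (t, s) $ 3" t 0 0, OF le _ _ Gv_cont_t[OF s]] p0 False show ?thesis by auto
      qed
      then show False using nz by blast
    qed
    then show ?thesis using 3 Gv_gf[OF s] by (simp add: space_form_def sf_gf)
  qed
qed


lemma first_var:
  assumes crit: "Theta_critical \<rho> \<mu> I \<gamma>"
  shows "integral {a..b} (\<lambda>s. Fx (0, s)) = 0"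
proof -
  obtain e where e: "e > 0" "\<And>t s. \<bar>t\<bar> < e \<Longrightarrow> s \<in> {a..b} \<Longrightarrow> Qp (t, s) > 1/2"
    using Q_unif by blast
  let ?U = "{-e<..<e}"
  have QI: "Qp (t, s) > 0" if "t \<in> ?U" "s \<in> I" for t s
  proof (cases "s \<in> {a..b}")
    case True
    then have "\<bar>t\<bar> < e" using that by auto
    then show ?thesis using e(2)[of t s] True by auto
  next
    case False then show ?thesis using Vv_out[OF that(2) False] TT[OF that(2)] by (simp add: Qp_def)
  qed
  have sm: "smooth_on (?U \<times> I) Gv"
    unfolding Gv_def vv_def[abs_def] by (rule smooth_ev[OF BH I]) auto
  have "((\<lambda>t. Theta \<rho> \<mu> (\<lambda>s. Gv (t, s)) a b) has_real_derivative 0) (at 0)"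
  proof (rule crit[unfolded Theta_critical_def, rule_format])
    show "0 < e \<and> a \<le> b \<and> {a..b} \<subseteq> I \<and> smooth_on (?U \<times> I) Gv \<and>
      (\<forall>t\<in>?U. \<forall>s\<in>I. Gv (t, s) \<in> space_form \<rho>) \<and>
      (\<forall>t\<in>?U. \<forall>s\<in>I. vel (\<lambda>s'. Gv (t, s')) s \<noteq> 0) \<and>
      (\<forall>s\<in>I. Gv (0, s) = \<gamma> s) \<and> (\<forall>t\<in>?U. \<forall>s\<in>I - {a..b}. Gv (t, s) = \<gamma> s)"
    proof (intro conjI ballI)
      show "0 < e" by (rule e(1))
      show "a \<le> b" using ab by simp
      show "{a..b} \<subseteq> I" by (rule abI)
      show "smooth_on (?U \<times> I) Gv" by (rule sm)
      show "Gv (t, s) \<in> space_form \<rho>" if "s \<in> I" for t s using Gv_space[OF that] .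
      show "vel (\<lambda>s'. Gv (t, s')) s \<noteq> 0" if "t \<in> ?U" "s \<in> I" for t s
        using QI[OF that] by (auto simp: vel_Gv[OF that(2)] Qp_def gf_def)
      show "Gv (0, s) = \<gamma> s" if "s \<in> I" for s using vals0[OF that] by simp
      show "Gv (t, s) = \<gamma> s" if "s \<in> I - {a..b}" for t s
        using that phi_out[of s] by (auto simp: Gv_eq)
    qed
  qed
  then have d0: "((\<lambda>t. integral {a..b} (\<lambda>s. Fi (t, s))) has_real_derivative 0) (at 0)"
    by (simp add: Theta_eq)
  have S: "?U \<times> {a..b} \<subseteq> UNIV \<times> I" using abI by auto
  have QS: "\<And>x. x \<in> ?U \<times> {a..b} \<Longrightarrow> Qp x > 0" using QI abI by auto
  note cF = cont_F[OF S QS]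
  have "((\<lambda>t. integral (cbox a b) (\<lambda>s. Fi (t, s))) has_real_derivative integral (cbox a b) (\<lambda>s. Fx (0, s))) (at 0 within ?U)"
  proof (rule leibniz_rule_field_derivative)
    show "((\<lambda>t. Fi (t, s)) has_real_derivative Fx (t, s)) (at t within ?U)" if "t \<in> ?U" "s \<in> cbox a b" for t s
    proof -
      have s': "s \<in> I" using that abI by auto
      show ?thesis using Fi_deriv[OF s' QI[OF that(1) s']] by (rule has_field_derivative_at_within)
    qed
    show "(\<lambda>s. Fi (t, s)) integrable_on cbox a b" if "t \<in> ?U" for t
    proof (rule integrable_continuous)
      show "continuous_on (cbox a b) (\<lambda>s. Fi (t, s))"
        by (rule continuous_on_compose2[OF cF(2), of _ "\<lambda>s. (t, s)"]) (use that in \<open>auto intro!: continuous_intros\<close>)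
    qed
    show "continuous_on (?U \<times> cbox a b) (\<lambda>(t, s). Fx (t, s))" using cF(1) by simp
    show "0 \<in> ?U" using e by simp
    show "convex ?U" by (rule convex_real_interval)
  qed
  then have "((\<lambda>t. integral {a..b} (\<lambda>s. Fi (t, s))) has_real_derivative integral {a..b} (\<lambda>s. Fx (0, s))) (at 0)"
    by (simp add: at_within_open[of 0 ?U] e(1))
  with d0 show ?thesis using DERIV_unique by blast
qed


definition "det3x X Y Z = Ad (Ad (Mu (X (1::nat)) (subx (Mu (Y (2::nat)) (Z (3::nat))) (Mu (Y 3) (Z 2))))
   (Mu (Cst (-1)) (Mu (X 2) (subx (Mu (Y 1) (Z 3)) (Mu (Y 3) (Z 1))))))
   (Mu (X 3) (subx (Mu (Y 1) (Z 2)) (Mu (Y 2) (Z 1))))"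

definition "kx = det3x nx (\<lambda>j. Bs j 1) (\<lambda>j. Bs j 2)"
definition "Px = Cmp 2 0 kx"
definition "Pf s = exp (\<mu> * kap s)"
definition "P1 s = ev B H (dS Px) (0, s)"
definition "P2 s = ev B H (dS (dS Px)) (0, s)"

lemma ev_kx: "ev B H kx x = kap (snd x)"
  by (simp add: kx_def det3x_def subx_def ev_nx Bf_def kap_def det3_def algebra_simps)

lemma ev_Px: "ev B H Px x = Pf (snd x)"
  by (simp add: Px_def Hf_def ev_kx Pf_def)

lemma Pf_deriv: "s \<in> I \<Longrightarrow> (Pf has_real_derivative P1 s) (at s)"
  using ev_dS_deriv[OF BH, of s Px 0] by (simp add: ev_Px P1_def)
lemma P1_deriv: "s \<in> I \<Longrightarrow> (P1 has_real_derivative P2 s) (at s)"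
  using ev_dS_deriv[OF BH, of s "dS Px" 0] by (simp add: P1_def[abs_def] P2_def)

lemma cont_0: "continuous_on I (\<lambda>s. ev B H e (0, s))"
  by (rule continuous_on_compose2[OF ev_continuous_on[OF BH], of _ "\<lambda>s. (0, s)"]) (auto intro!: continuous_intros)

lemma cont_PP: "continuous_on I Pf" "continuous_on I P2" "continuous_on I kap" "continuous_on I phi"
    "continuous_on I ph2"
  using cont_0[of Px] cont_0[of "dS (dS Px)"] cont_0[of kx] cont_0[of phx] cont_0[of "dS (dS phx)"]
  by (simp_all add: ev_Px P2_def[abs_def] ev_kx ph2_def[abs_def])

definition "EL s = \<mu> * P2 s + \<mu> * (\<rho> + (kap s)\<^sup>2) * Pf s - kap s * Pf s"

lemma weak_EL:
  assumes crit: "Theta_critical \<rho> \<mu> I \<gamma>"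
  shows "((\<lambda>s. phi s * EL s) has_integral 0) {a..b}"
proof -
  have sI: "s \<in> {a..b} \<Longrightarrow> s \<in> I" for s using abI by auto
  have cFx: "continuous_on {a..b} (\<lambda>s. Fx (0, s))"
  proof -
    have "continuous_on {a..b} (\<lambda>s. Pf s * (\<mu> * (ph2 s + (\<rho> + (kap s)\<^sup>2) * phi s) - kap s * phi s))"
      using cont_PP abI by (intro continuous_intros; auto intro: continuous_on_subset)
    then show ?thesis by (rule continuous_on_eq) (auto simp: Fx0 sI Pf_def)
  qed
  have i1: "((\<lambda>s. Fx (0, s)) has_integral 0) {a..b}"
    using first_var[OF crit] integrable_continuous_interval[OF cFx] has_integral_integral by metis
  let ?h = "\<lambda>s. Pf s * ph1 s - P1 s * phi s"
  have i2: "((\<lambda>s. Pf s * ph2 s - P2 s * phi s) has_integral (?h b - ?h a)) {a..b}"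
  proof (rule fundamental_theorem_of_calculus)
    show "a \<le> b" using ab by simp
    fix s assume "s \<in> {a..b}"
    then have s: "s \<in> I" by (rule sI)
    have "(?h has_real_derivative (P1 s * ph1 s + ph2 s * Pf s) - (P2 s * phi s + ph1 s * P1 s)) (at s)"
      by (intro derivative_intros Pf_deriv[OF s] P1_deriv[OF s] phi_deriv[OF s] ph1_deriv[OF s])
    then show "(?h has_vector_derivative Pf s * ph2 s - P2 s * phi s) (at s within {a..b})"
      by (auto simp: has_real_derivative_iff_has_vector_derivative algebra_simps intro: has_vector_derivative_at_within)
  qed
  have h0: "?h b - ?h a = 0" using phi_out ph1_ab by simp
  have "((\<lambda>s. Fx (0, s) - \<mu> * (Pf s * ph2 s - P2 s * phi s)) has_integral 0 - \<mu> * 0) {a..b}"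
    by (intro has_integral_diff i1 has_integral_mult_right) (use i2 h0 in simp)
  then have hi: "((\<lambda>s. Fx (0, s) - \<mu> * (Pf s * ph2 s - P2 s * phi s)) has_integral 0) {a..b}" by simp
  have eq: "\<And>s. s \<in> {a..b} \<Longrightarrow> Fx (0, s) - \<mu> * (Pf s * ph2 s - P2 s * phi s) = phi s * EL s"
    by (auto simp: Fx0 sI EL_def Pf_def algebra_simps)
  show ?thesis by (rule has_integral_eq[OF eq hi])
qed

end

lemma (in cv) ex_ab: assumes "s \<in> I" shows "\<exists>a b. a < s \<and> s < b \<and> {a..b} \<subseteq> I"
proof -
  obtain e where e: "e > 0" "ball s e \<subseteq> I" using I assms open_contains_ball by blast
  have "{s - e/2..s + e/2} \<subseteq> ball s e" using e(1) by (auto simp: dist_real_def)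
  then show ?thesis using e by (intro exI[of _ "s - e/2"] exI[of _ "s + e/2"]) auto
qed

theorem proposition2p2:
  fixes \<rho> \<mu> :: real and I :: "real set" and \<gamma> :: "real \<Rightarrow> real^3"
  assumes "\<mu> \<noteq> 0"
    and "open I" and "is_interval I" and "I \<noteq> {}"
    and "smooth_on I \<gamma>"
    and "\<forall>s\<in>I. \<gamma> s \<in> space_form \<rho>"
    and "\<forall>s\<in>I. sf_form \<rho> (vel \<gamma> s) (vel \<gamma> s) = 1"
    and "\<exists>s\<in>I. geod_curv \<rho> \<gamma> s \<noteq> 0"
    and "Theta_critical \<rho> \<mu> I \<gamma>"
  shows "\<forall>s\<in>I. deriv (deriv (\<lambda>s. exp (\<mu> * geod_curv \<rho> \<gamma> s))) s
               + ((geod_curv \<rho> \<gamma> s)\<^sup>2 - geod_curv \<rho> \<gamma> s / \<mu> + \<rho>) * exp (\<mu> * geod_curv \<rho> \<gamma> s) = 0"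
proof -
  interpret cv \<rho> I \<gamma> using assms(2,5,6,7) by unfold_locales
  let ?E = "cvab.EL \<rho> \<gamma> \<mu>"
  obtain s1 where "s1 \<in> I" using assms(4) by blast
  then obtain a0 b0 where ab0: "a0 < s1" "s1 < b0" "{a0..b0} \<subseteq> I" using ex_ab by blast
  interpret A0: cvab \<rho> I \<gamma> a0 b0 \<mu> using ab0 by unfold_locales auto
  have contE: "continuous_on I ?E"
    unfolding A0.EL_def[abs_def] using A0.cont_PP by (intro continuous_intros) auto
  have key: "?E s0 = 0" if s0: "s0 \<in> I" for s0
  proof (rule ccontr)
    assume ne: "?E s0 \<noteq> 0"
    define c where "c = (if ?E s0 > 0 then 1 else -1::real)"
    have cpos: "c * ?E s0 > 0" using ne by (auto simp: c_def)
    have "isCont ?E s0" using contE s0 I continuous_on_eq_continuous_at by blast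
    then obtain d where d: "d > 0" "\<And>s. dist s s0 < d \<Longrightarrow> dist (?E s) (?E s0) < \<bar>?E s0\<bar>"
      unfolding continuous_at_eps_delta using ne by (meson zero_less_abs_iff)
    obtain e where e: "e > 0" "ball s0 e \<subseteq> I" using I s0 open_contains_ball by blast
    define r where "r = min d e / 2"
    have r: "r > 0" "r < d" "r < e" using d e by (auto simp: r_def)
    have "{s0 - r..s0 + r} \<subseteq> ball s0 e" using r by (auto simp: dist_real_def)
    then have sub: "{s0 - r..s0 + r} \<subseteq> I" using e(2) by blast
    interpret A: cvab \<rho> I \<gamma> "s0 - r" "s0 + r" \<mu> using sub r by unfold_locales auto
    have cE: "c * ?E s > 0" if "s \<in> {s0 - r..s0 + r}" for s
    proof -
      have "dist s s0 < d" using that r by (auto simp: dist_real_def)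
      then have "\<bar>?E s - ?E s0\<bar> < \<bar>?E s0\<bar>" using d(2) by (simp add: dist_real_def)
      then show ?thesis using cpos by (auto simp: c_def split: if_splits)
    qed
    have hi: "((\<lambda>s. c * (A.phi s * ?E s)) has_integral c * 0) {s0 - r..s0 + r}"
      by (intro has_integral_mult_right A.weak_EL assms(9))
    have f0: "A.phi s0 * (c * ?E s0) = 0"
    proof (rule has_integral_0_cbox_imp_0[of "s0 - r" "s0 + r" "\<lambda>s. A.phi s * (c * ?E s)"])
      show "continuous_on (cbox (s0 - r) (s0 + r)) (\<lambda>s. A.phi s * (c * ?E s))"
        using A.cont_PP(4) contE sub by (auto intro!: continuous_intros intro: continuous_on_subset)
      show "0 \<le> A.phi s * (c * ?E s)" if "s \<in> box (s0 - r) (s0 + r)" for s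
        using cE[of s] that A.phi_nonneg[of s] by auto
      show "((\<lambda>s. A.phi s * (c * ?E s)) has_integral 0) (cbox (s0 - r) (s0 + r))"
        using hi by (simp add: mult_ac)
      show "box (s0 - r) (s0 + r) \<noteq> {}" using r by simp
      show "s0 \<in> cbox (s0 - r) (s0 + r)" using r by simp
    qed
    moreover have "A.phi s0 > 0" using r by (intro A.phi_pos) auto
    ultimately show False using cpos by auto
  qed
  show ?thesis
  proof
    fix s assume s: "s \<in> I"
    let ?f = "\<lambda>s. exp (\<mu> * geod_curv \<rho> \<gamma> s)"
    have fd: "(?f has_real_derivative A0.P1 s') (at s')" if "s' \<in> I" for s'
      by (rule has_field_derivative_transform_within_open[OF A0.Pf_deriv[OF that] I that])
         (simp add: A0.Pf_def geod_eq)
    have d1: "deriv ?f s' = A0.P1 s'" if "s' \<in> I" for s' using fd[OF that] by (rule DERIV_imp_deriv)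
    have "(deriv ?f has_real_derivative A0.P2 s) (at s)"
      by (rule has_field_derivative_transform_within_open[OF A0.P1_deriv[OF s] I s]) (simp add: d1)
    then have d2: "deriv (deriv ?f) s = A0.P2 s" by (rule DERIV_imp_deriv)
    have "?E s = 0" by (rule key[OF s])
    then have "\<mu> * (A0.P2 s + ((kap s)\<^sup>2 - kap s / \<mu> + \<rho>) * A0.Pf s) = 0"
      using assms(1) by (simp add: A0.EL_def algebra_simps)
    then show "deriv (deriv ?f) s + ((geod_curv \<rho> \<gamma> s)\<^sup>2 - geod_curv \<rho> \<gamma> s / \<mu> + \<rho>) * ?f s = 0"
      using assms(1) by (simp add: d2 geod_eq[OF s] A0.Pf_def)
  qed
qed

end
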